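(* With the notation below, for every $k\in\mathbb{Z}$ one has $\hat N_{k-1}\subseteq\hat N_k$ and the index $[\hat N_k:\hat N_{k-1}]$ equals $q$.
   Context: Let $F$ be a non-archimedean local field with ring of integers $\mathfrak{o}$, uniformizer $\varpi$, and finite residue field of cardinality $q$. $X=X_{PGL_2(F)}$ is the Bruhat–Tits tree of $PGL_2(F)$: vertices are homothety classes of $\mathfrak{o}$-lattices in $F^2$, with $[L],[L']$ adjacent iff there are representatives with $\varpi L\subsetneq L'\subsetneq L$; it is $(q+1)$-regular. $d$ is the path-length distance; $\mathrm{Aut}(X)$ is the group of distance-preserving bijections of the vertex set with the topology of pointwise convergence, and $PGL_2(F)\hookrightarrow\mathrm{Aut}(X)$ via the linear action on lattices. For an edge $\eta=\{y_1,y_2\}$ and $e\ge1$, $B(\eta,e)=\{y:\min(d(y,y_1),d(y,y_2))\le e\}$, and $\hat G=\hat G^{(e)}=\{g\in\mathrm{Aut}(X):\forall\eta\ \exists g'\in PGL_2(F),\ g|_{B(\eta,e)}=g'|_{B(\eta,e)}\}$ for a fixed $e\ge1$. Ends are equivalence classes of infinite paths (agreeing after an index shift from some point on); $[x,\omega]$ denotes the unique infinite path from vertex $x$ in the class $\omega$. Fix a doubly infinite path $(x_n)_{n\in\mathbb{Z}}$; let $\omega$ be the end of $(x_n)_{n\ge0}$. Set $\hat B=\{g\in\hat G: g(\omega)=\omega\}$, $\hat N=\{b\in\hat B: b(x_i)=x_i\text{ for some }i\in\mathbb{Z}\}$, and for $k\in\mathbb{Z}$, $\hat N_k=\{n\in\hat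 N: n \text{ fixes every vertex of } [x_k,\omega]\}$. *)

theory Defs
  imports Main
begin

text \<open>The valuation v is only meaningful on nonzero elements; its value at 0 is irrelevant.\<close>

definition val_ring :: "('a::field \<Rightarrow> int) \<Rightarrow> 'a set" where
  "val_ring v = {x. x = 0 \<or> 0 \<le> v x}"

definition max_ideal :: "('a::field \<Rightarrow> int) \<Rightarrow> 'a set" where
  "max_ideal v = {x. x = 0 \<or> 0 < v x}"

definition residue_classes :: "('a::field \<Rightarrow> int) \<Rightarrow> 'a set set" where
  "residue_classes v = (\<lambda>x. {y \<in> val_ring v. y - x \<in> max_ideal v}) ` val_ring v"

definition val_complete :: "('a::field \<Rightarrow> int) \<Rightarrow> bool" where
  "val_complete v \<longleftrightarrow>
    (\<forall>s :: nat \<Rightarrow> 'a.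
       (\<forall>N::int. \<exists>M. \<forall>m n. M \<le> m \<longrightarrow> M \<le> n \<longrightarrow> s m = s n \<or> N \<le> v (s m - s n))
       \<longrightarrow> (\<exists>L. \<forall>N::int. \<exists>M. \<forall>n. M \<le> n \<longrightarrow> s n = L \<or> N \<le> v (s n - L)))"

definition nonarch_local_field :: "('a::field \<Rightarrow> int) \<Rightarrow> nat \<Rightarrow> bool" where
  "nonarch_local_field v q \<longleftrightarrow>
     (\<forall>x y. x \<noteq> 0 \<longrightarrow> y \<noteq> 0 \<longrightarrow> v (x * y) = v x + v y) \<and>
     (\<forall>x y. x \<noteq> 0 \<longrightarrow> y \<noteq> 0 \<longrightarrow> x + y \<noteq> 0 \<longrightarrow> min (v x) (v y) \<le> v (x + y)) \<and>
     (\<exists>\<pi>. \<pi> \<noteq> 0 \<and> v \<pi> = 1) \<and>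
     val_complete v \<and>
     finite (residue_classes v) \<and> card (residue_classes v) = q"

definition olattice :: "('a::field \<Rightarrow> int) \<Rightarrow> ('a \<times> 'a) set \<Rightarrow> bool" where
  "olattice v L \<longleftrightarrow> (\<exists>u1 u2 w1 w2. u1 * w2 - u2 * w1 \<noteq> 0 \<and>
      L = {(a * u1 + b * w1, a * u2 + b * w2) | a b. a \<in> val_ring v \<and> b \<in> val_ring v})"

definition scale :: "'a::field \<Rightarrow> ('a \<times> 'a) set \<Rightarrow> ('a \<times> 'a) set" where
  "scale c L = (\<lambda>(x, y). (c * x, c * y)) ` L"

definition hclass :: "('a::field \<Rightarrow> int) \<Rightarrow> ('a \<times> 'a) set \<Rightarrow> ('a \<times> 'a) set set" where
  "hclass v L = {scale c L | c. c \<noteq> 0}"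

definition BT_vertices :: "('a::field \<Rightarrow> int) \<Rightarrow> ('a \<times> 'a) set set set" where
  "BT_vertices v = {hclass v L | L. olattice v L}"

definition BT_adj :: "('a::field \<Rightarrow> int) \<Rightarrow> ('a \<times> 'a) set set \<Rightarrow> ('a \<times> 'a) set set \<Rightarrow> bool" where
  "BT_adj v X Y \<longleftrightarrow> X \<in> BT_vertices v \<and> Y \<in> BT_vertices v \<and>
     (\<exists>L \<in> X. \<exists>L' \<in> Y. \<exists>\<pi>. \<pi> \<noteq> 0 \<and> v \<pi> = 1 \<and> scale \<pi> L \<subset> L' \<and> L' \<subset> L)"

definition BT_dist :: "('a::field \<Rightarrow> int) \<Rightarrow> ('a \<times> 'a) set set \<Rightarrow> ('a \<times> 'a) set set \<Rightarrow> nat" where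
  "BT_dist v X Y = (LEAST n. \<exists>p. p 0 = X \<and> p n = Y \<and> (\<forall>i<n. BT_adj v (p i) (p (Suc i))))"

text \<open>Automorphisms: distance-preserving bijections of the vertex set
  (extended by the identity outside the vertex set, so that they are determined by
  their action on vertices).\<close>
definition BT_aut :: "('a::field \<Rightarrow> int) \<Rightarrow> (('a \<times> 'a) set set \<Rightarrow> ('a \<times> 'a) set set) \<Rightarrow> bool" where
  "BT_aut v g \<longleftrightarrow> bij_betw g (BT_vertices v) (BT_vertices v) \<and>
     (\<forall>X \<in> BT_vertices v. \<forall>Y \<in> BT_vertices v. BT_dist v (g X) (g Y) = BT_dist v X Y) \<and>
     (\<forall>X. X \<notin> BT_vertices v \<longrightarrow> g X = X)"

definition lin_act :: "'a::field \<times> 'a \<times> 'a \<times> 'a \<Rightarrow> 'a \<times> 'a \<Rightarrow> 'a \<times> 'a" where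
  "lin_act M p = (case M of (a, b, c, d) \<Rightarrow> (case p of (x, y) \<Rightarrow> (a * x + b * y, c * x + d * y)))"

definition mat_vact :: "'a::field \<times> 'a \<times> 'a \<times> 'a \<Rightarrow> ('a \<times> 'a) set set \<Rightarrow> ('a \<times> 'a) set set" where
  "mat_vact M X = (\<lambda>L. lin_act M ` L) ` X"

definition invertible_mat :: "'a::field \<times> 'a \<times> 'a \<times> 'a \<Rightarrow> bool" where
  "invertible_mat M \<longleftrightarrow> (case M of (a, b, c, d) \<Rightarrow> a * d - b * c \<noteq> 0)"

definition edge_ball :: "('a::field \<Rightarrow> int) \<Rightarrow> ('a \<times> 'a) set set \<Rightarrow> ('a \<times> 'a) set set \<Rightarrow> nat \<Rightarrow> ('a \<times> 'a) set set set" where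
  "edge_ball v y1 y2 e = {y \<in> BT_vertices v. min (BT_dist v y y1) (BT_dist v y y2) \<le> e}"

definition G_hat :: "('a::field \<Rightarrow> int) \<Rightarrow> nat \<Rightarrow> (('a \<times> 'a) set set \<Rightarrow> ('a \<times> 'a) set set) set" where
  "G_hat v e = {g. BT_aut v g \<and>
     (\<forall>y1 y2. BT_adj v y1 y2 \<longrightarrow>
        (\<exists>M. invertible_mat M \<and> (\<forall>y \<in> edge_ball v y1 y2 e. g y = mat_vact M y)))}"

definition BT_ray :: "('a::field \<Rightarrow> int) \<Rightarrow> (nat \<Rightarrow> ('a \<times> 'a) set set) \<Rightarrow> bool" where
  "BT_ray v p \<longleftrightarrow> (\<forall>i. p i \<in> BT_vertices v) \<and>
     (\<forall>i j. BT_dist v (p i) (p j) = nat \<bar>int i - int j\<bar>)"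

definition ray_equiv :: "(nat \<Rightarrow> 'b) \<Rightarrow> (nat \<Rightarrow> 'b) \<Rightarrow> bool" where
  "ray_equiv p r \<longleftrightarrow> (\<exists>a b. \<forall>n. p (n + a) = r (n + b))"

definition BT_biinf_path :: "('a::field \<Rightarrow> int) \<Rightarrow> (int \<Rightarrow> ('a \<times> 'a) set set) \<Rightarrow> bool" where
  "BT_biinf_path v x \<longleftrightarrow> (\<forall>i. x i \<in> BT_vertices v) \<and>
     (\<forall>i j. BT_dist v (x i) (x j) = nat \<bar>i - j\<bar>)"

text \<open>The ray (x_n)_{n>=0}, representing the end omega.\<close>
definition pos_ray :: "(int \<Rightarrow> 'b) \<Rightarrow> nat \<Rightarrow> 'b" where
  "pos_ray x n = x (int n)"

definition B_hat :: "('a::field \<Rightarrow> int) \<Rightarrow> nat \<Rightarrow> (int \<Rightarrow> ('a \<times> 'a) set set)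
    \<Rightarrow> (('a \<times> 'a) set set \<Rightarrow> ('a \<times> 'a) set set) set" where
  "B_hat v e x = {g \<in> G_hat v e. ray_equiv (g \<circ> pos_ray x) (pos_ray x)}"

definition N_hat :: "('a::field \<Rightarrow> int) \<Rightarrow> nat \<Rightarrow> (int \<Rightarrow> ('a \<times> 'a) set set)
    \<Rightarrow> (('a \<times> 'a) set set \<Rightarrow> ('a \<times> 'a) set set) set" where
  "N_hat v e x = {b \<in> B_hat v e x. \<exists>i. b (x i) = x i}"

definition N_hat_k :: "('a::field \<Rightarrow> int) \<Rightarrow> nat \<Rightarrow> (int \<Rightarrow> ('a \<times> 'a) set set) \<Rightarrow> int
    \<Rightarrow> (('a \<times> 'a) set set \<Rightarrow> ('a \<times> 'a) set set) set" where
  "N_hat_k v e x k = {n \<in> N_hat v e x. \<forall>p. BT_ray v p \<and> p 0 = x k \<and> ray_equiv p (pos_ray x)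
       \<longrightarrow> (\<forall>i. n (p i) = p i)}"

text \<open>Index [H : K]: number of left cosets g K (g in H), group law = composition.\<close>
definition coset_index :: "('b \<Rightarrow> 'b) set \<Rightarrow> ('b \<Rightarrow> 'b) set \<Rightarrow> nat" where
  "coset_index H K = card ((\<lambda>g. (\<lambda>h. g \<circ> h) ` K) ` H)"

end

theory Submission
  imports Defs
begin


locale VF =
  fixes v :: "'a::field \<Rightarrow> int"
  assumes vmult: "x \<noteq> 0 \<Longrightarrow> y \<noteq> 0 \<Longrightarrow> v (x * y) = v x + v y"
  and vultra: "x \<noteq> 0 \<Longrightarrow> y \<noteq> 0 \<Longrightarrow> x + y \<noteq> 0 \<Longrightarrow> min (v x) (v y) \<le> v (x + y)"
  and pi_ex: "\<exists>p. p \<noteq> 0 \<and> v p = 1"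
begin

definition pi where "pi = (SOME p. p \<noteq> 0 \<and> v p = 1)"

lemma pi: "pi \<noteq> 0" "v pi = 1"
  using someI_ex[OF pi_ex] unfolding pi_def by auto

definition dv :: "int \<Rightarrow> 'a \<Rightarrow> bool" where "dv n x \<longleftrightarrow> x = 0 \<or> n \<le> v x"

abbreviation Ov where "Ov x \<equiv> dv 0 x"

lemma v1[simp]: "v 1 = 0"
  using vmult[of 1 1] by simp

lemma vinv: "x \<noteq> 0 \<Longrightarrow> v (inverse x) = - v x"
  using vmult[of x "inverse x"] by simp

lemma vdiv: "x \<noteq> 0 \<Longrightarrow> y \<noteq> 0 \<Longrightarrow> v (x / y) = v x - v y"
  by (simp add: divide_inverse vmult vinv)

lemma vm1[simp]: "v (-1) = 0"
  using vmult[of "-1" "-1"] by simp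

lemma vneg[simp]: "v (- x) = v x"
proof (cases "x = 0")
  case False thus ?thesis using vmult[of "-1" x] by simp
qed simp

lemma vpow: "x \<noteq> 0 \<Longrightarrow> v (x ^ n) = int n * v x"
  by (induction n) (auto simp: vmult algebra_simps)

lemma vpi_pow[simp]: "v (pi ^ n) = int n"
  using vpow[OF pi(1)] pi(2) by simp

lemma pi_pow_nz[simp]: "pi ^ n \<noteq> 0" using pi(1) by simp

lemma dv_0[simp]: "dv n 0" by (simp add: dv_def)

lemma dv_add: "dv n x \<Longrightarrow> dv n y \<Longrightarrow> dv n (x + y)"
  unfolding dv_def using vultra[of x y] by (cases "x = 0"; cases "y = 0"; cases "x + y = 0") auto

lemma dv_neg[simp]: "dv n (- x) = dv n x" by (simp add: dv_def)

lemma dv_diff: "dv n x \<Longrightarrow> dv n y \<Longrightarrow> dv n (x - y)"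
  using dv_add[of n x "-y"] by simp

lemma dv_mult: "dv n x \<Longrightarrow> dv m y \<Longrightarrow> dv (n + m) (x * y)"
  unfolding dv_def by (cases "y = 0"; cases "x = 0") (auto simp: vmult)

lemma dv_mono: "dv n x \<Longrightarrow> m \<le> n \<Longrightarrow> dv m x"
  unfolding dv_def by auto

lemma OO_1[simp]: "Ov 1" by (simp add: dv_def)

lemma OO_mult: "Ov x \<Longrightarrow> Ov y \<Longrightarrow> Ov (x * y)"
  using dv_mult[of 0 x 0 y] by simp

lemma dv_iff: "x \<noteq> 0 \<Longrightarrow> dv n x \<longleftrightarrow> n \<le> v x" by (simp add: dv_def)

lemma OO_pi_pow[simp]: "Ov (pi ^ n)" by (simp add: dv_def)

lemma dv_pi_pow_mult: "dv m y \<Longrightarrow> dv (int n + m) (pi ^ n * y)"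
  using dv_mult[of "int n" "pi^n" m y] by (simp add: dv_def)

lemma v_add_strict: "x \<noteq> 0 \<Longrightarrow> dv (v x + 1) y \<Longrightarrow> x + y \<noteq> 0 \<and> v (x + y) = v x"
proof -
  assume x: "x \<noteq> 0" and y: "dv (v x + 1) y"
  show ?thesis
  proof (cases "y = 0")
    case True thus ?thesis using x by simp
  next
    case False
    hence vy: "v y > v x" using y by (simp add: dv_def)
    have nz: "x + y \<noteq> 0"
    proof
      assume "x + y = 0" hence "y = - x" by (simp add: add_eq_0_iff)
      thus False using vy by simp
    qed
    have "min (v x) (v y) \<le> v (x + y)" using vultra[OF x False nz] .
    moreover have "min (v (x+y)) (v (-y)) \<le> v (x + y + - y)" 
      using vultra[OF nz, of "-y"] False x by simp
    ultimately show ?thesis using nz vy by auto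
  qed
qed

definition sm :: "'a \<Rightarrow> 'a \<times> 'a \<Rightarrow> 'a \<times> 'a" where "sm c z = (c * fst z, c * snd z)"
definition vp :: "'a \<times> 'a \<Rightarrow> 'a \<times> 'a \<Rightarrow> 'a \<times> 'a" where "vp z z' = (fst z + fst z', snd z + snd z')"
definition det2 :: "'a \<times> 'a \<Rightarrow> 'a \<times> 'a \<Rightarrow> 'a" where "det2 u w = fst u * snd w - snd u * fst w"

definition Lat :: "'a \<times> 'a \<Rightarrow> 'a \<times> 'a \<Rightarrow> ('a \<times> 'a) set" where
  "Lat u w = {vp (sm a u) (sm b w) | a b. Ov a \<and> Ov b}"

lemma det2_simps[simp]:
  "det2 (vp a b) w = det2 a w + det2 b w"
  "det2 w (vp a b) = det2 w a + det2 w b"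
  "det2 (sm c a) w = c * det2 a w"
  "det2 w (sm c a) = c * det2 w a"
  "det2 a a = 0"
  by (auto simp: det2_def vp_def sm_def algebra_simps)

lemma det2_swap: "det2 w u = - det2 u w" by (simp add: det2_def algebra_simps)

lemma vec_decomp:
  assumes "det2 u w \<noteq> 0"
  shows "z = vp (sm (det2 z w / det2 u w) u) (sm (det2 u z / det2 u w) w)"
proof -
  obtain z1 z2 u1 u2 w1 w2 where e: "z = (z1,z2)" "u = (u1,u2)" "w = (w1,w2)" by (cases z, cases u, cases w) auto
  let ?D = "u1 * w2 - u2 * w1"
  have D: "?D \<noteq> 0" using assms e by (simp add: det2_def)
  have "(z1 * w2 - z2 * w1) * u1 + (u1 * z2 - u2 * z1) * w1 = z1 * ?D"
       "(z1 * w2 - z2 * w1) * u2 + (u1 * z2 - u2 * z1) * w2 = z2 * ?D" by (simp_all add: algebra_simps)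
  hence "(z1 * w2 - z2 * w1) / ?D * u1 + (u1 * z2 - u2 * z1) / ?D * w1 = z1"
        "(z1 * w2 - z2 * w1) / ?D * u2 + (u1 * z2 - u2 * z1) / ?D * w2 = z2"
    using D by (simp_all add: divide_simps)
  thus ?thesis using e by (simp add: det2_def vp_def sm_def)
qed

lemma coord_unique:
  assumes "det2 u w \<noteq> 0" "z = vp (sm a u) (sm b w)"
  shows "a = det2 z w / det2 u w" "b = det2 u z / det2 u w"
  using assms by (auto simp: field_simps)

lemma mem_Lat:
  assumes "det2 u w \<noteq> 0"
  shows "z \<in> Lat u w \<longleftrightarrow> Ov (det2 z w / det2 u w) \<and> Ov (det2 u z / det2 u w)"
proof
  assume "z \<in> Lat u w"
  then obtain a b where "Ov a" "Ov b" "z = vp (sm a u) (sm b w)" unfolding Lat_def by auto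
  thus "Ov (det2 z w / det2 u w) \<and> Ov (det2 u z / det2 u w)"
    using coord_unique[OF assms] by metis
next
  assume "Ov (det2 z w / det2 u w) \<and> Ov (det2 u z / det2 u w)"
  thus "z \<in> Lat u w" unfolding Lat_def using vec_decomp[OF assms, of z] by blast
qed

lemma vp_sm_simps[simp]:
  "vp (sm a z) (sm b z) = sm (a + b) z"
  "sm a (sm b z) = sm (a * b) z"
  "sm 1 z = z"
  "sm 0 z = (0,0)"
  "sm a (vp z z') = vp (sm a z) (sm a z')"
  by (auto simp: vp_def sm_def algebra_simps)

lemma vp_ac: "vp a b = vp b a" "vp (vp a b) c = vp a (vp b c)" "vp a (vp b c) = vp b (vp a c)"
  by (auto simp: vp_def algebra_simps)

lemma Lat_add: "z \<in> Lat u w \<Longrightarrow> z' \<in> Lat u w \<Longrightarrow> vp z z' \<in> Lat u w"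
proof -
  assume "z \<in> Lat u w" "z' \<in> Lat u w"
  then obtain a b a' b' where "Ov a" "Ov b" "Ov a'" "Ov b'" "z = vp (sm a u) (sm b w)" "z' = vp (sm a' u) (sm b' w)"
    unfolding Lat_def by auto
  moreover hence "vp z z' = vp (sm (a+a') u) (sm (b+b') w)" by (auto simp: vp_def sm_def algebra_simps)
  ultimately show ?thesis unfolding Lat_def using dv_add by fastforce
qed

lemma Lat_sm: "z \<in> Lat u w \<Longrightarrow> Ov c \<Longrightarrow> sm c z \<in> Lat u w"
proof -
  assume "z \<in> Lat u w" "Ov c"
  then obtain a b where "Ov a" "Ov b" "z = vp (sm a u) (sm b w)"
    unfolding Lat_def by auto
  moreover hence "sm c z = vp (sm (c*a) u) (sm (c*b) w)" by (auto simp: vp_def sm_def algebra_simps)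
  ultimately show ?thesis unfolding Lat_def using OO_mult \<open>Ov c\<close> by fastforce
qed

lemma Lat_gen: "u \<in> Lat u w" "w \<in> Lat u w"
  unfolding Lat_def
  by (rule CollectI, rule exI[of _ 1], rule exI[of _ 0], simp add: vp_def sm_def)
     (rule CollectI, rule exI[of _ 0], rule exI[of _ 1], simp add: vp_def sm_def)

lemma Lat_sub: "u' \<in> Lat u w \<Longrightarrow> w' \<in> Lat u w \<Longrightarrow> Lat u' w' \<subseteq> Lat u w"
  unfolding Lat_def[of u' w'] using Lat_add Lat_sm by blast

lemma Lat_sub_iff: "Lat u' w' \<subseteq> Lat u w \<longleftrightarrow> u' \<in> Lat u w \<and> w' \<in> Lat u w"
  using Lat_sub Lat_gen by blast

lemma Lat_eqI: "u' \<in> Lat u w \<Longrightarrow> w' \<in> Lat u w \<Longrightarrow> u \<in> Lat u' w' \<Longrightarrow> w \<in> Lat u' w' \<Longrightarrow> Lat u' w' = Lat u w"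
  using Lat_sub by blast

lemma Lat_zero: "(0,0) \<in> Lat u w" using Lat_sm[OF Lat_gen(1), of 0] by simp

end

context VF begin

lemma Ov_div_iff: "y \<noteq> 0 \<Longrightarrow> Ov (x / y) \<longleftrightarrow> dv (v y) x"
  by (cases "x = 0") (auto simp: dv_def vdiv)

lemma mem_Lat_comb:
  assumes "det2 u w \<noteq> 0"
  shows "vp (sm a u) (sm b w) \<in> Lat u w \<longleftrightarrow> Ov a \<and> Ov b"
  using mem_Lat[OF assms] coord_unique[OF assms refl] by metis

lemma scale_sm: "scale c L = sm c ` L"
  unfolding scale_def sm_def by (auto simp: case_prod_beta)

lemma sm_comb: "sm c (vp (sm a u) (sm b w)) = vp (sm a (sm c u)) (sm b (sm c w))"
  by (auto simp: sm_def vp_def algebra_simps)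

lemma scale_Lat: "scale c (Lat u w) = Lat (sm c u) (sm c w)"
proof (intro set_eqI iffI)
  fix z assume "z \<in> scale c (Lat u w)"
  then obtain a b where "Ov a" "Ov b" "z = sm c (vp (sm a u) (sm b w))"
    unfolding scale_sm Lat_def by blast
  thus "z \<in> Lat (sm c u) (sm c w)" unfolding sm_comb Lat_def by blast
next
  fix z assume "z \<in> Lat (sm c u) (sm c w)"
  then obtain a b where "Ov a" "Ov b" "z = vp (sm a (sm c u)) (sm b (sm c w))"
    unfolding Lat_def by blast
  hence "z = sm c (vp (sm a u) (sm b w))" "vp (sm a u) (sm b w) \<in> Lat u w" 
    unfolding sm_comb Lat_def by blast+
  thus "z \<in> scale c (Lat u w)" unfolding scale_sm by blast
qed

lemma scale_scale: "scale (c::'a) (scale d L) = scale (c * d) L"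
  unfolding scale_sm by (auto simp: image_image)

lemma scale_1[simp]: "scale (1::'a) L = L"
  unfolding scale_sm by simp

lemma scale_mono_set: "L \<subseteq> L' \<Longrightarrow> scale (c::'a) L \<subseteq> scale c L'"
  unfolding scale_sm by auto

lemma scale_inj: "(c::'a) \<noteq> 0 \<Longrightarrow> scale c L \<subseteq> scale c L' \<Longrightarrow> L \<subseteq> L'"
  using scale_mono_set[of "scale c L" "scale c L'" "inverse c"] by (simp add: scale_scale)

lemma det2_sm_sm: "det2 (sm c u) (sm d w) = c * d * det2 u w"
  by simp

lemma Lat_swap: "Lat w u = Lat u w"
proof (intro set_eqI iffI)
  fix z assume "z \<in> Lat w u"
  then obtain a b where "Ov a" "Ov b" "z = vp (sm a w) (sm b u)" unfolding Lat_def by blast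
  hence "Ov b \<and> Ov a \<and> z = vp (sm b u) (sm a w)" by (simp add: vp_ac(1))
  thus "z \<in> Lat u w" unfolding Lat_def by blast
next
  fix z assume "z \<in> Lat u w"
  then obtain a b where "Ov a" "Ov b" "z = vp (sm a u) (sm b w)" unfolding Lat_def by blast
  hence "Ov b \<and> Ov a \<and> z = vp (sm b w) (sm a u)" by (simp add: vp_ac(1))
  thus "z \<in> Lat w u" unfolding Lat_def by blast
qed

lemma Lat_sub_comb:
  assumes "det2 u w \<noteq> 0" "u' = vp (sm a u) (sm b w)" "w' = vp (sm c u) (sm d w)"
     "Ov a" "Ov b" "Ov c" "Ov d"
  shows "Lat u' w' \<subseteq> Lat u w"
  using assms mem_Lat_comb Lat_sub by metis

lemma unit_inv: "x \<noteq> 0 \<Longrightarrow> v x = 0 \<Longrightarrow> Ov (inverse x)"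
  by (simp add: dv_def vinv)

lemma Ov_unit: "x \<noteq> 0 \<Longrightarrow> v x = 0 \<Longrightarrow> Ov x" by (simp add: dv_def)

lemma Lat_eq_det:
  assumes D: "det2 u w \<noteq> 0" and sub: "Lat u' w' \<subseteq> Lat u w" and D': "det2 u' w' \<noteq> 0"
    and vd: "v (det2 u' w') = v (det2 u w)"
  shows "Lat u' w' = Lat u w"
proof -
  have "u' \<in> Lat u w" "w' \<in> Lat u w" using sub Lat_sub_iff by blast+
  then obtain a b c d where oo: "Ov a" "Ov b" "Ov c" "Ov d" and eu: "u' = vp (sm a u) (sm b w)"
    and ew: "w' = vp (sm c u) (sm d w)" unfolding Lat_def by blast
  define e where "e = a * d - b * c"
  have de: "det2 u' w' = e * det2 u w" unfolding eu ew e_def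
    by (simp add: det2_swap[of w u] algebra_simps)
  have enz: "e \<noteq> 0" using D' de by auto
  have ve: "v e = 0" using vd D D' de enz by (simp add: vmult)
  have ie: "Ov (inverse e)" using unit_inv[OF enz ve] .
  obtain u1 u2 w1 w2 where uw: "u = (u1,u2)" "w = (w1,w2)" by (cases u, cases w) auto
  have i1: "e * u1 = d * (a * u1 + b * w1) - b * (c * u1 + d * w1)"
     "e * u2 = d * (a * u2 + b * w2) - b * (c * u2 + d * w2)"
     "e * w1 = a * (c * u1 + d * w1) - c * (a * u1 + b * w1)"
     "e * w2 = a * (c * u2 + d * w2) - c * (a * u2 + b * w2)"
    by (simp_all add: e_def algebra_simps)
  have "u1 = d / e * (a * u1 + b * w1) + - b / e * (c * u1 + d * w1)"
     "u2 = d / e * (a * u2 + b * w2) + - b / e * (c * u2 + d * w2)"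
     "w1 = - c / e * (a * u1 + b * w1) + a / e * (c * u1 + d * w1)"
     "w2 = - c / e * (a * u2 + b * w2) + a / e * (c * u2 + d * w2)"
    using i1 enz by (simp_all add: divide_simps, simp_all add: algebra_simps)
  hence "u = vp (sm (d / e) u') (sm (- b / e) w')" "w = vp (sm (- c / e) u') (sm (a / e) w')"
    unfolding eu ew uw by (simp_all add: vp_def sm_def)
  moreover have "Ov (d / e)" "Ov (- b / e)" "Ov (- c / e)" "Ov (a / e)"
    using OO_mult[OF _ ie] oo by (auto simp: divide_inverse)
  ultimately have "u \<in> Lat u' w'" "w \<in> Lat u' w'" using mem_Lat_comb[OF D'] by metis+
  thus ?thesis using sub Lat_sub by blast
qed

lemma vp_zero[simp]: "vp z (0,0) = z" "vp (0,0) z = z" by (auto simp: vp_def)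

lemma Lat_sm1: "Ov a \<Longrightarrow> sm a u \<in> Lat u w" using Lat_sm[OF Lat_gen(1)] .
lemma Lat_sm2: "Ov a \<Longrightarrow> sm a w \<in> Lat u w" using Lat_sm[OF Lat_gen(2)] .

lemma Lat_unit: "v e = 0 \<Longrightarrow> e \<noteq> 0 \<Longrightarrow> det2 u w \<noteq> 0 \<Longrightarrow> Lat (sm e u) w = Lat u w"
proof -
  assume a: "v e = 0" "e \<noteq> 0" "det2 u w \<noteq> 0"
  have sub: "Lat (sm e u) w \<subseteq> Lat u w"
    by (rule Lat_sub[OF Lat_sm1 Lat_gen(2)]) (rule Ov_unit[OF a(2,1)])
  have d: "det2 (sm e u) w = e * det2 u w" by simp
  show ?thesis
    by (rule Lat_eq_det[OF a(3) sub]) (simp_all only: d, simp add: a, simp add: vmult a)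
qed

lemma Lat_shear: "Ov b \<Longrightarrow> det2 u w \<noteq> 0 \<Longrightarrow> Lat (vp u (sm b w)) w = Lat u w"
proof -
  assume a: "Ov b" "det2 u w \<noteq> 0"
  have sub: "Lat (vp u (sm b w)) w \<subseteq> Lat u w"
    by (rule Lat_sub[OF Lat_add[OF Lat_gen(1) Lat_sm2[OF a(1)]] Lat_gen(2)])
  have d: "det2 (vp u (sm b w)) w = det2 u w" by simp
  show ?thesis
    by (rule Lat_eq_det[OF a(2) sub]) (simp_all only: d a, simp)
qed

lemma Lat_unit2: "v e = 0 \<Longrightarrow> e \<noteq> 0 \<Longrightarrow> det2 u w \<noteq> 0 \<Longrightarrow> Lat u (sm e w) = Lat u w"
proof -
  assume a: "v e = 0" "e \<noteq> 0" "det2 u w \<noteq> 0"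
  have "det2 w u \<noteq> 0" using a(3) det2_swap[of w u] by simp
  hence "Lat (sm e w) u = Lat w u" using Lat_unit[OF a(1,2)] by blast
  thus ?thesis using Lat_swap[of u "sm e w"] Lat_swap[of u w] by simp
qed

lemma Lat_shear2: "Ov b \<Longrightarrow> det2 u w \<noteq> 0 \<Longrightarrow> Lat u (vp w (sm b u)) = Lat u w"
proof -
  assume a: "Ov b" "det2 u w \<noteq> 0"
  have "det2 w u \<noteq> 0" using a(2) det2_swap[of w u] by simp
  hence h: "Lat (vp w (sm b u)) u = Lat w u" using Lat_shear[OF a(1)] by blast
  have "Lat u (vp w (sm b u)) = Lat (vp w (sm b u)) u" by (rule Lat_swap)
  also have "\<dots> = Lat w u" by (rule h)
  also have "\<dots> = Lat u w" by (rule Lat_swap)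
  finally show ?thesis .
qed

lemma scale_unit: "v c = 0 \<Longrightarrow> c \<noteq> 0 \<Longrightarrow> det2 u w \<noteq> 0 \<Longrightarrow> scale c (Lat u w) = Lat u w"
proof -
  assume a: "v c = 0" "c \<noteq> 0" "det2 u w \<noteq> 0"
  have "Lat (sm c u) (sm c w) = Lat u (sm c w)" using a by (intro Lat_unit) auto
  also have "\<dots> = Lat u w" using a by (intro Lat_unit2) auto
  finally show ?thesis unfolding scale_Lat .
qed

lemma scale_sub: "Ov c \<Longrightarrow> det2 u w \<noteq> 0 \<Longrightarrow> scale c (Lat u w) \<subseteq> Lat u w"
  unfolding scale_Lat by (intro Lat_sub Lat_sm1 Lat_sm2)

lemma scale_le: "(c::'a) \<noteq> 0 \<Longrightarrow> d \<noteq> 0 \<Longrightarrow> v d \<le> v c \<Longrightarrow> det2 u w \<noteq> 0 \<Longrightarrow> scale c (Lat u w) \<subseteq> scale d (Lat u w)"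
proof -
  assume a: "c \<noteq> 0" "d \<noteq> 0" "v d \<le> v c" "det2 u w \<noteq> 0"
  have "Ov (c / d)" using a by (simp add: dv_def vdiv)
  hence "scale d (scale (c/d) (Lat u w)) \<subseteq> scale d (Lat u w)" by (rule scale_mono_set[OF scale_sub[OF _ a(4)]])
  thus ?thesis using a by (simp add: scale_scale)
qed

end

context VF begin

declare pi(1)[simp]

definition pos :: "('a \<times> 'a) set \<Rightarrow> ('a \<times> 'a) set \<Rightarrow> nat \<Rightarrow> bool" where
  "pos L L' n \<longleftrightarrow> (\<exists>u w. det2 u w \<noteq> 0 \<and> L = Lat u w \<and> L' = Lat u (sm (pi ^ n) w))"

lemma det2_pi: "det2 u w \<noteq> 0 \<Longrightarrow> det2 u (sm (pi ^ n) w) \<noteq> 0" by (simp add: pi)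

lemma pos_sub: "pos L L' n \<Longrightarrow> L' \<subseteq> L"
  unfolding pos_def using Lat_sub[OF Lat_gen(1) Lat_sm2[OF OO_pi_pow]] by blast

lemma u_notin_pi:
  assumes that: "det2 u w' \<noteq> 0" shows "u \<notin> scale pi (Lat u w')"
proof
  assume "u \<in> scale pi (Lat u w')"
  hence "u \<in> Lat (sm pi u) (sm pi w')" by (simp add: scale_Lat)
  moreover have "det2 (sm pi u) (sm pi w') \<noteq> 0" using that pi by simp
  ultimately have "Ov (det2 u (sm pi w') / det2 (sm pi u) (sm pi w'))" using mem_Lat by blast
  moreover have "det2 u (sm pi w') / det2 (sm pi u) (sm pi w') = inverse pi"
    using that pi by (simp add: field_simps)
  ultimately show False using pi by (simp add: dv_def vinv)
qed

lemma pos_not_pi: "pos L L' n \<Longrightarrow> \<not> L' \<subseteq> scale pi L"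
proof
  assume "pos L L' n" "L' \<subseteq> scale pi L"
  then obtain u w where a: "det2 u w \<noteq> 0" "L = Lat u w" "L' = Lat u (sm (pi ^ n) w)" unfolding pos_def by blast
  have "u \<in> L'" using a Lat_gen by blast
  hence "u \<in> scale pi (Lat u w)" using \<open>L' \<subseteq> scale pi L\<close> a by blast
  thus False using u_notin_pi[OF a(1)] by blast
qed

lemma pos_scale_sub:
  assumes "pos L L' n" "s \<noteq> 0"
  shows "scale s L \<subseteq> L' \<longleftrightarrow> int n \<le> v s"
proof -
  obtain u w where a: "det2 u w \<noteq> 0" "L = Lat u w" "L' = Lat u (sm (pi ^ n) w)" using assms(1) unfolding pos_def by blast
  let ?D = "det2 u (sm (pi ^ n) w)"
  have D: "?D \<noteq> 0" using a by simp
  have "scale s L \<subseteq> L' \<longleftrightarrow> sm s u \<in> L' \<and> sm s w \<in> L'" using a by (simp add: scale_Lat Lat_sub_iff)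
  also have "sm s u \<in> L' \<longleftrightarrow> Ov s" using a D mem_Lat[OF D, of "sm s u"] by (simp add: field_simps)
  also have "sm s w \<in> L' \<longleftrightarrow> Ov (s / pi ^ n)" using a D mem_Lat[OF D, of "sm s w"] by (simp add: field_simps)
  also have "Ov (s / pi ^ n) \<longleftrightarrow> int n \<le> v s" using assms(2) by (simp add: dv_def vdiv)
  finally show ?thesis using assms(2) by (auto simp: dv_def)
qed

lemma pos_0: "det2 u w \<noteq> 0 \<Longrightarrow> pos (Lat u w) (Lat u w) 0"
  unfolding pos_def by (rule exI[of _ u], rule exI[of _ w]) simp

lemma pos_scale: "pos L L' n \<Longrightarrow> c \<noteq> 0 \<Longrightarrow> pos (scale c L) (scale c L') n"
proof -
  assume "pos L L' n" "c \<noteq> 0"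
  then obtain u w where a: "det2 u w \<noteq> 0" "L = Lat u w" "L' = Lat u (sm (pi ^ n) w)" unfolding pos_def by blast
  have "scale c L = Lat (sm c u) (sm c w)" "scale c L' = Lat (sm c u) (sm (pi ^ n) (sm c w))"
    using a by (simp_all add: scale_Lat mult.commute)
  moreover have "det2 (sm c u) (sm c w) \<noteq> 0" using a \<open>c \<noteq> 0\<close> by simp
  ultimately show ?thesis unfolding pos_def by blast
qed

lemma pos_sym: "pos L L' n \<Longrightarrow> pos L' (scale (pi ^ n) L) n"
proof -
  assume "pos L L' n"
  then obtain u w where a: "det2 u w \<noteq> 0" "L = Lat u w" "L' = Lat u (sm (pi ^ n) w)" unfolding pos_def by blast
  have "L' = Lat (sm (pi ^ n) w) u" using a Lat_swap by metis
  moreover have "scale (pi ^ n) L = Lat (sm (pi ^ n) w) (sm (pi ^ n) u)" using a Lat_swap by (metis scale_Lat)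
  moreover have "det2 (sm (pi ^ n) w) u \<noteq> 0" using a det2_swap[of w u] by simp
  ultimately show ?thesis unfolding pos_def by blast
qed

lemma norm_unit:
  assumes D: "det2 u w \<noteq> 0" and M: "M \<subseteq> Lat u w" "\<not> M \<subseteq> scale pi (Lat u w)"
    and cM: "scale c M \<subseteq> Lat u w" "\<not> scale c M \<subseteq> scale pi (Lat u w)" and c: "c \<noteq> 0"
  shows "v c = 0"
proof (rule ccontr)
  assume "v c \<noteq> 0"
  hence "1 \<le> v c \<or> 1 \<le> v (inverse c)" using vinv[OF c] by linarith
  thus False
  proof
    assume "1 \<le> v c"
    hence "scale c (Lat u w) \<subseteq> scale pi (Lat u w)" using scale_le[OF c pi(1) _ D] pi by simp
    moreover have "scale c M \<subseteq> scale c (Lat u w)" using scale_mono_set[OF M(1)] .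
    ultimately show False using cM(2) by blast
  next
    assume h: "1 \<le> v (inverse c)"
    have ic: "inverse c \<noteq> 0" using c by simp
    have "scale (inverse c) (Lat u w) \<subseteq> scale pi (Lat u w)" using scale_le[OF ic pi(1) _ D] pi h by simp
    moreover have "scale (inverse c) (scale c M) \<subseteq> scale (inverse c) (Lat u w)" using scale_mono_set[OF cM(1)] .
    moreover have "scale (inverse c) (scale c M) = M" using c by (simp add: scale_scale)
    ultimately show False using M(2) by blast
  qed
qed

lemma min_val_list: "\<exists>x\<in>set xs. x \<noteq> 0 \<Longrightarrow> \<exists>t\<in>set xs. t \<noteq> 0 \<and> (\<forall>x\<in>set xs. dv (v t) x)"
proof (induction xs)
  case Nil thus ?case by simp
next
  case (Cons y xs)
  show ?case
  proof (cases "\<exists>x\<in>set xs. x \<noteq> 0")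
    case False
    hence "y \<noteq> 0" using Cons.prems by auto
    thus ?thesis using False by (auto simp: dv_def)
  next
    case True
    then obtain t where t: "t \<in> set xs" "t \<noteq> 0" "\<forall>x\<in>set xs. dv (v t) x" using Cons.IH by blast
    show ?thesis
    proof (cases "y \<noteq> 0 \<and> v y < v t")
      case True thus ?thesis using t by (auto simp: dv_def)
    next
      case False thus ?thesis using t by (auto simp: dv_def)
    qed
  qed
qed

lemma smith_core:
  assumes D: "det2 u w \<noteq> 0" and u'': "u'' = vp (sm a u) (sm b w)" and w'': "w'' = vp (sm c u) (sm d w)"
    and o: "Ov a" "Ov b" "Ov c" "Ov d" and a: "a \<noteq> 0" "v a = 0" and D'': "det2 u'' w'' \<noteq> 0"
  shows "\<exists>n. pos (Lat u w) (Lat u'' w'') n"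
proof -
  define e where "e = d - c * b / a"
  have ca: "Ov (- c / a)" using o(3) a by (cases "c = 0") (auto simp: dv_def vdiv)
  have eo: "Ov e" unfolding e_def using OO_mult[OF o(3) OO_mult[OF o(2) unit_inv[OF a]]] o(4)
    by (intro dv_diff) (auto simp: divide_inverse mult.assoc)
  have w3: "vp w'' (sm (- c / a) u'') = sm e w"
    unfolding u'' w'' e_def using a by (cases u; cases w) (auto simp: vp_def sm_def field_simps)
  have dd: "det2 u'' w'' = a * e * det2 u w"
    unfolding u'' w'' e_def using a by (simp add: det2_swap[of w u] field_simps)
  have enz: "e \<noteq> 0" using D'' dd by auto
  have L1: "Lat u'' w'' = Lat u'' (sm e w)" using Lat_shear2[OF ca D''] w3 by simp
  define n where "n = nat (v e)"
  have vn: "v e = int n" using eo enz unfolding n_def by (simp add: dv_def)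
  define eps where "eps = e / pi ^ n"
  have epsnz: "eps \<noteq> 0" using enz by (simp add: eps_def)
  have veps: "v eps = 0" using enz vn by (simp add: eps_def vdiv)
  have e_eq: "sm e w = sm (pi ^ n) (sm eps w)" by (simp add: eps_def)
  have Dau: "det2 (sm a u) w \<noteq> 0" using a D by simp
  have L0: "Lat u w = Lat u'' w"
    unfolding u'' using Lat_shear[OF o(2) Dau] Lat_unit[OF a(2) a(1) D] by simp
  have Du: "det2 u'' w \<noteq> 0" unfolding u'' using a D by simp
  have L0': "Lat u'' w = Lat u'' (sm eps w)" using Lat_unit2[OF veps epsnz Du] by simp
  have Deps: "det2 u'' (sm eps w) \<noteq> 0" using Du epsnz by simp
  show ?thesis unfolding pos_def using L0 L0' L1 e_eq Deps by metis
qed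

lemma vp_comm: "vp a b = vp b a" by (rule vp_ac(1))

lemma smith:
  assumes D: "det2 u w \<noteq> 0" and D': "det2 u' w' \<noteq> 0"
  shows "\<exists>c n. c \<noteq> 0 \<and> pos (Lat u w) (scale c (Lat u' w')) n"
proof -
  define a where "a = det2 u' w / det2 u w"
  define b where "b = det2 u u' / det2 u w"
  define c where "c = det2 w' w / det2 u w"
  define d where "d = det2 u w' / det2 u w"
  have eu: "u' = vp (sm a u) (sm b w)" and ew: "w' = vp (sm c u) (sm d w)"
    unfolding a_def b_def c_def d_def using vec_decomp[OF D] by auto
  have "\<exists>x\<in>set [a,b,c,d]. x \<noteq> 0"
  proof (rule ccontr)
    assume "\<not> ?thesis" hence "a = 0" "b = 0" by auto
    hence "u' = (0,0)" using eu by (simp add: vp_def sm_def)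
    thus False using D' by (simp add: det2_def)
  qed
  then obtain t where t: "t \<in> set [a,b,c,d]" "t \<noteq> 0" "\<forall>x\<in>set [a,b,c,d]. dv (v t) x"
    using min_val_list by blast
  have it: "inverse t \<noteq> 0" using t by simp
  have ot: "Ov (x * inverse t)" if "x \<in> set [a,b,c,d]" for x
    using t that by (cases "x = 0") (auto simp: dv_def vmult vinv)
  have oa: "Ov (a * inverse t)" "Ov (b * inverse t)" "Ov (c * inverse t)" "Ov (d * inverse t)" using ot by auto
  define u'' where "u'' = sm (inverse t) u'"
  define w'' where "w'' = sm (inverse t) w'"
  have sc: "scale (inverse t) (Lat u' w') = Lat u'' w''" unfolding u''_def w''_def by (simp add: scale_Lat)
  have D'': "det2 u'' w'' \<noteq> 0" unfolding u''_def w''_def using D' t by simp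
  have D''s: "det2 w'' u'' \<noteq> 0" using D'' det2_swap[of w'' u''] by simp
  have Ds: "det2 w u \<noteq> 0" using D det2_swap[of w u] by simp
  have eu'': "u'' = vp (sm (a * inverse t) u) (sm (b * inverse t) w)" unfolding u''_def eu by (simp add: mult.commute)
  have ew'': "w'' = vp (sm (c * inverse t) u) (sm (d * inverse t) w)" unfolding w''_def ew by (simp add: mult.commute)
  have one: "x * inverse t \<noteq> 0 \<and> v (x * inverse t) = 0" if "x = t" for x using that t by simp
  have "\<exists>n. pos (Lat u w) (Lat u'' w'') n"
  proof -
    consider "t = a" | "t = b" | "t = c" | "t = d" using t(1) by auto
    thus ?thesis
    proof cases
      case 1 thus ?thesis using smith_core[OF D eu'' ew'' oa _ _ D''] one by blast
    next
      case 2
      have "\<exists>n. pos (Lat w u) (Lat u'' w'') n"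
        using smith_core[OF Ds eu''[unfolded vp_comm[of "sm (a * inverse t) u"]] ew''[unfolded vp_comm[of "sm (c * inverse t) u"]] oa(2,1,4,3) _ _ D''] one 2 by blast
      thus ?thesis using Lat_swap by metis
    next
      case 3
      have "\<exists>n. pos (Lat u w) (Lat w'' u'') n"
        using smith_core[OF D ew'' eu'' oa(3,4,1,2) _ _ D''s] one 3 by blast
      thus ?thesis using Lat_swap by metis
    next
      case 4
      have "\<exists>n. pos (Lat w u) (Lat w'' u'') n"
        using smith_core[OF Ds ew''[unfolded vp_comm[of "sm (c * inverse t) u"]] eu''[unfolded vp_comm[of "sm (a * inverse t) u"]] oa(4,3,2,1) _ _ D''s] one 4 by blast
      thus ?thesis using Lat_swap by metis
    qed
  qed
  thus ?thesis using sc it by metis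
qed

end

context VF begin

definition islat :: "('a \<times> 'a) set \<Rightarrow> bool" where
  "islat L \<longleftrightarrow> (\<exists>u w. det2 u w \<noteq> 0 \<and> L = Lat u w)"

lemma val_ring_iff: "x \<in> val_ring v \<longleftrightarrow> Ov x" by (simp add: val_ring_def dv_def)

lemma olattice_iff: "olattice v L \<longleftrightarrow> islat L"
proof
  assume "olattice v L"
  then obtain u1 u2 w1 w2 where h: "u1 * w2 - u2 * w1 \<noteq> 0"
    "L = {(a * u1 + b * w1, a * u2 + b * w2) |a b. a \<in> val_ring v \<and> b \<in> val_ring v}"
    unfolding olattice_def by blast
  have "L = Lat (u1,u2) (w1,w2)" unfolding h(2) Lat_def val_ring_iff by (simp add: vp_def sm_def)
  moreover have "det2 (u1,u2) (w1,w2) \<noteq> 0" using h(1) by (simp add: det2_def)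
  ultimately show "islat L" unfolding islat_def by blast
next
  assume "islat L"
  then obtain u w where h: "det2 u w \<noteq> 0" "L = Lat u w" unfolding islat_def by blast
  obtain u1 u2 w1 w2 where e: "u = (u1,u2)" "w = (w1,w2)" by (cases u, cases w) auto
  have "L = {(a * u1 + b * w1, a * u2 + b * w2) |a b. a \<in> val_ring v \<and> b \<in> val_ring v}"
    unfolding h(2) e Lat_def val_ring_iff by (simp add: vp_def sm_def)
  moreover have "u1 * w2 - u2 * w1 \<noteq> 0" using h(1) e by (simp add: det2_def)
  ultimately show "olattice v L" unfolding olattice_def by blast
qed

lemma islat_scale: "islat L \<Longrightarrow> c \<noteq> 0 \<Longrightarrow> islat (scale c L)"
proof -
  assume "islat L" "c \<noteq> 0"
  then obtain u w where h: "det2 u w \<noteq> 0" "L = Lat u w" unfolding islat_def by blast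
  have "scale c L = Lat (sm c u) (sm c w)" using h by (simp add: scale_Lat)
  moreover have "det2 (sm c u) (sm c w) \<noteq> 0" using h \<open>c \<noteq> 0\<close> by simp
  ultimately show ?thesis unfolding islat_def by blast
qed

lemma pos_islat: "pos L L' n \<Longrightarrow> islat L \<and> islat L'"
proof -
  assume "pos L L' n"
  then obtain u w where h: "det2 u w \<noteq> 0" "L = Lat u w" "L' = Lat u (sm (pi ^ n) w)" unfolding pos_def by blast
  have "det2 u (sm (pi ^ n) w) \<noteq> 0" using det2_pi[OF h(1)] .
  thus ?thesis using h unfolding islat_def by blast
qed

abbreviation V where "V \<equiv> BT_vertices v"

lemma V_iff: "X \<in> V \<longleftrightarrow> (\<exists>L. islat L \<and> X = hclass v L)"
  unfolding BT_vertices_def olattice_iff by (simp add: conj_commute)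

lemma in_hclass: "L \<in> hclass v L"
  unfolding hclass_def by (rule CollectI, rule exI[of _ 1]) simp

lemma hclass_mem: "L' \<in> hclass v L \<longleftrightarrow> (\<exists>c. c \<noteq> 0 \<and> L' = scale c L)"
  unfolding hclass_def by (simp add: conj_commute)

lemma hclass_eq: "L' \<in> hclass v L \<Longrightarrow> hclass v L' = hclass v L"
proof -
  assume "L' \<in> hclass v L"
  then obtain c where c: "c \<noteq> 0" "L' = scale c L" unfolding hclass_mem by blast
  show ?thesis
  proof (intro set_eqI iffI)
    fix M assume "M \<in> hclass v L'"
    then obtain d where d: "d \<noteq> 0" "M = scale d L'" unfolding hclass_mem by blast
    hence "M = scale (d * c) L" using c by (simp add: scale_scale)
    moreover have "d * c \<noteq> 0" using c d by simp
    ultimately show "M \<in> hclass v L" unfolding hclass_mem by blast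
  next
    fix M assume "M \<in> hclass v L"
    then obtain d where d: "d \<noteq> 0" "M = scale d L" unfolding hclass_mem by blast
    hence "M = scale (d / c) L'" using c by (simp add: scale_scale)
    moreover have "d / c \<noteq> 0" using c d by simp
    ultimately show "M \<in> hclass v L'" unfolding hclass_mem by blast
  qed
qed

lemma V_eq: "X \<in> V \<Longrightarrow> L \<in> X \<Longrightarrow> X = hclass v L"
proof -
  assume "X \<in> V" "L \<in> X"
  then obtain L0 where h: "X = hclass v L0" unfolding V_iff by blast
  show ?thesis using hclass_eq[of L L0] h \<open>L \<in> X\<close> by simp
qed

lemma V_mem_islat: "X \<in> V \<Longrightarrow> L \<in> X \<Longrightarrow> islat L"
proof -
  assume "X \<in> V" "L \<in> X"
  then obtain L0 where h: "islat L0" "X = hclass v L0" unfolding V_iff by blast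
  have "L \<in> hclass v L0" using h(2) \<open>L \<in> X\<close> by simp
  then obtain c where "c \<noteq> 0" "L = scale c L0" unfolding hclass_mem by blast
  thus ?thesis using islat_scale h by simp
qed

lemma V_two: "X \<in> V \<Longrightarrow> L \<in> X \<Longrightarrow> L' \<in> X \<Longrightarrow> \<exists>c. c \<noteq> 0 \<and> L' = scale c L"
proof -
  assume "X \<in> V" "L \<in> X" "L' \<in> X"
  hence "L' \<in> hclass v L" using V_eq by blast
  thus ?thesis unfolding hclass_mem .
qed

lemma V_scale: "X \<in> V \<Longrightarrow> L \<in> X \<Longrightarrow> c \<noteq> 0 \<Longrightarrow> scale c L \<in> X"
proof -
  assume a: "X \<in> V" "L \<in> X" "c \<noteq> 0"
  have "scale c L \<in> hclass v L" unfolding hclass_mem using a(3) by blast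
  thus ?thesis using V_eq[OF a(1,2)] by simp
qed

lemma V_ne: "X \<in> V \<Longrightarrow> \<exists>L. L \<in> X"
proof -
  assume "X \<in> V"
  then obtain L0 where h: "X = hclass v L0" unfolding V_iff by blast
  thus ?thesis using in_hclass by blast
qed

lemma hclass_V: "islat L \<Longrightarrow> hclass v L \<in> V"
  unfolding V_iff by blast

lemma scale_unit_islat: "islat L \<Longrightarrow> v c = 0 \<Longrightarrow> c \<noteq> 0 \<Longrightarrow> scale c L = L"
proof -
  assume "islat L" "v c = 0" "c \<noteq> 0"
  then obtain u w where h: "det2 u w \<noteq> 0" "L = Lat u w" unfolding islat_def by blast
  thus ?thesis using scale_unit[OF \<open>v c = 0\<close> \<open>c \<noteq> 0\<close> h(1)] by simp
qed

definition R where "R X Y n \<longleftrightarrow> (\<exists>L\<in>X. \<exists>L'\<in>Y. pos L L' n)"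

lemma R_strong: "X \<in> V \<Longrightarrow> Y \<in> V \<Longrightarrow> R X Y n \<Longrightarrow> L \<in> X \<Longrightarrow> \<exists>L'\<in>Y. pos L L' n"
proof -
  assume a: "X \<in> V" "Y \<in> V" "R X Y n" "L \<in> X"
  then obtain L1 L1' where b: "L1 \<in> X" "L1' \<in> Y" "pos L1 L1' n" unfolding R_def by blast
  obtain c where c: "c \<noteq> 0" "L = scale c L1" using V_two[OF a(1) b(1) a(4)] by blast
  have "pos L (scale c L1') n" using pos_scale[OF b(3) c(1)] c by simp
  thus ?thesis using V_scale[OF a(2) b(2) c(1)] by blast
qed

lemma R_exists: "X \<in> V \<Longrightarrow> Y \<in> V \<Longrightarrow> \<exists>n. R X Y n"
proof -
  assume a: "X \<in> V" "Y \<in> V"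
  obtain L L' where b: "L \<in> X" "L' \<in> Y" using V_ne a by blast
  obtain u w u' w' where l: "det2 u w \<noteq> 0" "L = Lat u w" "det2 u' w' \<noteq> 0" "L' = Lat u' w'"
    using V_mem_islat[OF a(1) b(1)] V_mem_islat[OF a(2) b(2)] unfolding islat_def by blast
  obtain c n where "c \<noteq> 0" "pos L (scale c L') n" using smith[OF l(1) l(3)] l by blast
  thus ?thesis unfolding R_def using b V_scale[OF a(2) b(2)] by blast
qed

lemma pos_unique_rep:
  assumes p1: "pos L L1 n" and p2: "pos L L2 m" and d: "d \<noteq> 0" "L2 = scale d L1"
  shows "L2 = L1 \<and> n = m"
proof -
  obtain u w where l: "det2 u w \<noteq> 0" "L = Lat u w" using p1 unfolding pos_def by blast
  have "v d = 0"
    apply (rule norm_unit[OF l(1), of L1])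
    using pos_sub[OF p1] pos_not_pi[OF p1] pos_sub[OF p2] pos_not_pi[OF p2] l d by auto
  hence e: "L2 = L1" using scale_unit_islat[OF conjunct2[OF pos_islat[OF p1]]] d by simp
  have "scale (pi ^ n) L \<subseteq> L1" "scale (pi ^ m) L \<subseteq> L2"
    using pos_scale_sub[OF p1, of "pi ^ n"] pos_scale_sub[OF p2, of "pi ^ m"] by auto
  hence "int m \<le> int n" "int n \<le> int m"
    using pos_scale_sub[OF p1, of "pi ^ m"] pos_scale_sub[OF p2, of "pi ^ n"] e by auto
  thus ?thesis using e by simp
qed

lemma R_unique: "X \<in> V \<Longrightarrow> Y \<in> V \<Longrightarrow> R X Y n \<Longrightarrow> R X Y m \<Longrightarrow> n = m"
proof -
  assume a: "X \<in> V" "Y \<in> V" "R X Y n" "R X Y m"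
  obtain L L1 where b: "L \<in> X" "L1 \<in> Y" "pos L L1 n" using a(3) unfolding R_def by blast
  obtain L2 where c: "L2 \<in> Y" "pos L L2 m" using R_strong[OF a(1,2,4) b(1)] by blast
  obtain d where "d \<noteq> 0" "L2 = scale d L1" using V_two[OF a(2) b(2) c(1)] by blast
  thus ?thesis using pos_unique_rep[OF b(3) c(2)] by blast
qed

definition D where "D X Y = (THE n. R X Y n)"

lemma D_R: "X \<in> V \<Longrightarrow> Y \<in> V \<Longrightarrow> R X Y (D X Y)"
  unfolding D_def using R_exists R_unique by (metis theI)

lemma D_eq: "X \<in> V \<Longrightarrow> Y \<in> V \<Longrightarrow> R X Y n \<Longrightarrow> D X Y = n"
  using D_R R_unique by blast

lemma R_refl: "X \<in> V \<Longrightarrow> R X X 0"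
proof -
  assume a: "X \<in> V"
  obtain L where "L \<in> X" using V_ne a by blast
  moreover then obtain u w where "det2 u w \<noteq> 0" "L = Lat u w" using V_mem_islat a unfolding islat_def by blast
  ultimately show ?thesis unfolding R_def using pos_0 by blast
qed

lemma R_sym: "X \<in> V \<Longrightarrow> R X Y n \<Longrightarrow> R Y X n"
proof -
  assume a: "X \<in> V" "R X Y n"
  then obtain L L' where b: "L \<in> X" "L' \<in> Y" "pos L L' n" unfolding R_def by blast
  have "scale (pi ^ n) L \<in> X" using V_scale[OF a(1) b(1)] by simp
  thus ?thesis using pos_sym[OF b(3)] b unfolding R_def by blast
qed

lemma R0: "X \<in> V \<Longrightarrow> Y \<in> V \<Longrightarrow> R X Y 0 \<Longrightarrow> X = Y"
proof -
  assume a: "X \<in> V" "Y \<in> V" "R X Y 0"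
  then obtain L L' where b: "L \<in> X" "L' \<in> Y" "pos L L' 0" unfolding R_def by blast
  hence "L' = L" unfolding pos_def by auto
  thus ?thesis using V_eq a b by metis
qed

lemma D_refl: "X \<in> V \<Longrightarrow> D X X = 0" using D_eq R_refl by blast
lemma D_sym: "X \<in> V \<Longrightarrow> Y \<in> V \<Longrightarrow> D X Y = D Y X" using D_eq D_R R_sym by metis
lemma D0: "X \<in> V \<Longrightarrow> Y \<in> V \<Longrightarrow> D X Y = 0 \<Longrightarrow> X = Y" using D_R R0 by metis

end

context VF begin

lemma scale_pi_unit: "islat L \<Longrightarrow> p \<noteq> 0 \<Longrightarrow> v p = 1 \<Longrightarrow> scale p L = scale pi L"
proof -
  assume a: "islat L" "p \<noteq> 0" "v p = 1"
  have "v (p / pi) = 0" "p / pi \<noteq> 0" using a pi by (simp_all add: vdiv)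
  hence "scale (p / pi) L = L" using scale_unit_islat[OF a(1)] by blast
  hence "scale pi (scale (p / pi) L) = scale pi L" by simp
  thus ?thesis by (simp add: scale_scale)
qed

lemma adj_R: assumes "BT_adj v X Y" shows "X \<in> V \<and> Y \<in> V \<and> R X Y 1"
proof -
  obtain L L' p where h: "X \<in> V" "Y \<in> V" "L \<in> X" "L' \<in> Y" "p \<noteq> 0" "v p = 1"
    "scale p L \<subset> L'" "L' \<subset> L" using assms unfolding BT_adj_def by blast
  have lL: "islat L" "islat L'" using V_mem_islat h by blast+
  obtain u w where l: "det2 u w \<noteq> 0" "L = Lat u w" using lL(1) unfolding islat_def by blast
  obtain u' w' where l': "det2 u' w' \<noteq> 0" "L' = Lat u' w'" using lL(2) unfolding islat_def by blast
  obtain c n where cn: "c \<noteq> 0" "pos L (scale c L') n" using smith[OF l(1) l'(1)] l l' by blast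
  have sp: "scale p L = scale pi L" using scale_pi_unit[OF lL(1) h(5,6)] .
  have n1: "\<not> L' \<subseteq> scale pi L" using h(7) sp by blast
  have "v c = 0"
    apply (rule norm_unit[OF l(1), of L' c])
    using h(8) n1 pos_sub[OF cn(2)] pos_not_pi[OF cn(2)] cn(1) l by auto
  hence "scale c L' = L'" using scale_unit_islat[OF lL(2)] cn(1) by blast
  hence p: "pos L L' n" using cn by simp
  have "int n \<le> 1" using pos_scale_sub[OF p, of pi] h(7) sp pi by auto
  moreover have "n \<noteq> 0"
  proof
    assume "n = 0" thus False using p h(8) unfolding pos_def by auto
  qed
  ultimately have "n = 1" by simp
  thus ?thesis using h p unfolding R_def by blast
qed

lemma R_adj: assumes "X \<in> V" "Y \<in> V" "R X Y 1" shows "BT_adj v X Y"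
proof -
  obtain L L' where h: "L \<in> X" "L' \<in> Y" "pos L L' 1" using assms unfolding R_def by blast
  have a1: "scale pi L \<subseteq> L'" using pos_scale_sub[OF h(3), of pi] pi by simp
  have a2: "\<not> L' \<subseteq> scale pi L" using pos_not_pi[OF h(3)] .
  have a3: "L' \<subseteq> L" using pos_sub[OF h(3)] .
  have a4: "\<not> L \<subseteq> L'" using pos_scale_sub[OF h(3), of 1] by simp
  show ?thesis unfolding BT_adj_def using assms(1,2) h(1,2) pi a1 a2 a3 a4 by blast
qed

lemma adj_iff: "BT_adj v X Y \<longleftrightarrow> X \<in> V \<and> Y \<in> V \<and> R X Y 1"
  using adj_R R_adj by blast

lemma adj_D: "BT_adj v X Y \<longleftrightarrow> X \<in> V \<and> Y \<in> V \<and> D X Y = 1"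
  using adj_iff D_eq D_R by metis

lemma dist_bound:
  assumes X: "X \<in> V" "L \<in> X" and Z: "Z \<in> V" "M \<in> Z" and sub: "M \<subseteq> L" and N: "scale (pi ^ N) L \<subseteq> M"
  shows "D X Z \<le> N"
proof -
  have lL: "islat L" "islat M" using V_mem_islat X Z by blast+
  obtain u w where l: "det2 u w \<noteq> 0" "L = Lat u w" using lL(1) unfolding islat_def by blast
  obtain u' w' where l': "det2 u' w' \<noteq> 0" "M = Lat u' w'" using lL(2) unfolding islat_def by blast
  obtain c n where cn: "c \<noteq> 0" "pos L (scale c M) n" using smith[OF l(1) l'(1)] l l' by blast
  have R: "R X Z n" unfolding R_def using cn X Z V_scale by blast
  have vc: "v c \<le> 0"
  proof (rule ccontr)
    assume "\<not> v c \<le> 0"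
    hence "scale c L \<subseteq> scale pi L" using scale_le[OF cn(1) pi(1) _ l(1)] pi l by simp
    moreover have "scale c M \<subseteq> scale c L" using scale_mono_set[OF sub] .
    ultimately show False using pos_not_pi[OF cn(2)] by blast
  qed
  have "scale (c * pi ^ N) L \<subseteq> scale c M" using scale_mono_set[OF N, of c] by (simp add: scale_scale)
  hence "int n \<le> v (c * pi ^ N)" using pos_scale_sub[OF cn(2)] cn(1) by simp
  hence "int n \<le> v c + int N" using cn(1) by (simp add: vmult)
  thus ?thesis using D_eq[OF X(1) Z(1) R] vc by simp
qed

lemma step_bound: assumes "X \<in> V" "BT_adj v Y Z" shows "D X Z \<le> D X Y + 1"
proof -
  have YZ: "Y \<in> V" "Z \<in> V" "R Y Z 1" using adj_R[OF assms(2)] by auto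
  obtain L where L: "L \<in> X" using V_ne assms(1) by blast
  obtain L1 where L1: "L1 \<in> Y" "pos L L1 (D X Y)" using R_strong[OF assms(1) YZ(1) D_R[OF assms(1) YZ(1)] L] by blast
  obtain M where M: "M \<in> Z" "pos L1 M 1" using R_strong[OF YZ L1(1)] by blast
  have sub: "M \<subseteq> L" using pos_sub[OF M(2)] pos_sub[OF L1(2)] by blast
  have "scale pi L1 \<subseteq> M" using pos_scale_sub[OF M(2), of pi] pi by simp
  moreover have "scale (pi ^ D X Y) L \<subseteq> L1" using pos_scale_sub[OF L1(2), of "pi ^ D X Y"] by simp
  ultimately have "scale (pi ^ (D X Y + 1)) L \<subseteq> M"
    using scale_mono_set[of "scale (pi ^ D X Y) L" L1 pi] by (simp add: scale_scale mult.commute)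
  thus ?thesis using dist_bound[OF assms(1) L YZ(2) M(1) sub] by simp
qed

lemma path_bound:
  assumes "X \<in> V" "p 0 = X" "\<forall>i<m. BT_adj v (p i) (p (Suc i))"
  shows "p m \<in> V \<and> D X (p m) \<le> m"
  using assms(3)
proof (induction m)
  case 0 thus ?case using assms D_refl by simp
next
  case (Suc m)
  hence IH: "p m \<in> V" "D X (p m) \<le> m" by auto
  have a: "BT_adj v (p m) (p (Suc m))" using Suc.prems by simp
  show ?case using step_bound[OF assms(1) a] IH adj_R[OF a] by simp
qed

lemma path_exists:
  assumes "X \<in> V" "Y \<in> V"
  shows "\<exists>p. p 0 = X \<and> p (D X Y) = Y \<and> (\<forall>i<D X Y. BT_adj v (p i) (p (Suc i)))"
proof -
  let ?n = "D X Y"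
  obtain L L' where h: "L \<in> X" "L' \<in> Y" "pos L L' ?n" using D_R[OF assms] unfolding R_def by blast
  obtain u w where l: "det2 u w \<noteq> 0" "L = Lat u w" "L' = Lat u (sm (pi ^ ?n) w)" using h(3) unfolding pos_def by blast
  define p where "p i = hclass v (Lat u (sm (pi ^ i) w))" for i
  have il: "islat (Lat u (sm (pi ^ i) w))" for i unfolding islat_def using det2_pi[OF l(1)] by blast
  have "p 0 = X" unfolding p_def using V_eq[OF assms(1) h(1)] l by simp
  moreover have "p ?n = Y" unfolding p_def using V_eq[OF assms(2) h(2)] l by simp
  moreover have "BT_adj v (p i) (p (Suc i))" for i
  proof (rule R_adj)
    show "p i \<in> V" "p (Suc i) \<in> V" unfolding p_def using hclass_V il by blast+
    have "pos (Lat u (sm (pi ^ i) w)) (Lat u (sm (pi ^ Suc i) w)) 1"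
      unfolding pos_def
      by (rule exI[of _ u], rule exI[of _ "sm (pi ^ i) w"]) (simp add: l(1))
    thus "R (p i) (p (Suc i)) 1" unfolding R_def p_def using in_hclass by blast
  qed
  ultimately show ?thesis by blast
qed

lemma BT_dist_D: assumes "X \<in> V" "Y \<in> V" shows "BT_dist v X Y = D X Y"
  unfolding BT_dist_def
proof (rule Least_equality)
  show "\<exists>p. p 0 = X \<and> p (D X Y) = Y \<and> (\<forall>i<D X Y. BT_adj v (p i) (p (Suc i)))" using path_exists[OF assms] .
next
  fix m assume "\<exists>p. p 0 = X \<and> p m = Y \<and> (\<forall>i<m. BT_adj v (p i) (p (Suc i)))"
  then obtain p where "p 0 = X" "p m = Y" "\<forall>i<m. BT_adj v (p i) (p (Suc i))" by blast
  thus "D X Y \<le> m" using path_bound[OF assms(1)] by blast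
qed

lemma det_sub_le:
  assumes D: "det2 u w \<noteq> 0" and sub: "Lat u' w' \<subseteq> Lat u w" and D': "det2 u' w' \<noteq> 0"
  shows "v (det2 u w) \<le> v (det2 u' w')"
proof -
  have "u' \<in> Lat u w" "w' \<in> Lat u w" using sub Lat_sub_iff by blast+
  then obtain a b c d where oo: "Ov a" "Ov b" "Ov c" "Ov d" and eu: "u' = vp (sm a u) (sm b w)"
    and ew: "w' = vp (sm c u) (sm d w)" unfolding Lat_def by blast
  define e where "e = a * d - b * c"
  have de: "det2 u' w' = e * det2 u w" unfolding eu ew e_def
    by (simp add: det2_swap[of w u] algebra_simps)
  have eo: "Ov e" unfolding e_def using oo by (intro dv_diff) (auto intro: OO_mult)
  have "e \<noteq> 0" using de D' by auto
  thus ?thesis using de eo D by (simp add: vmult dv_def)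
qed

lemma det_eq_lat:
  assumes "det2 u w \<noteq> 0" "det2 u' w' \<noteq> 0" "Lat u w = Lat u' w'"
  shows "v (det2 u w) = v (det2 u' w')"
  using det_sub_le[OF assms(1) _ assms(2)] det_sub_le[OF assms(2) _ assms(1)] assms(3) by fastforce

lemma geo_unique:
  assumes X: "X \<in> V" and Y: "Y \<in> V" and Z: "Z \<in> V" and l: "det2 u w \<noteq> 0" "Lat u w \<in> X" "Lat u (sm (pi ^ n) w) \<in> Y"
    and d1: "D X Z = i" and d2: "D Z Y = n - i" and i: "i \<le> n"
  shows "Z = hclass v (Lat u (sm (pi ^ i) w))"
proof -
  let ?L = "Lat u w" and ?L' = "Lat u (sm (pi ^ n) w)"
  have pL: "pos ?L ?L' n" unfolding pos_def using l(1) by blast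
  obtain M where M: "M \<in> Z" "pos ?L M i" using R_strong[OF X Z D_R[OF X Z] l(2)] d1 by auto
  obtain N where N: "N \<in> Y" "pos M N (n - i)" using R_strong[OF Z Y D_R[OF Z Y] M(1)] d2 by auto
  obtain c where c: "c \<noteq> 0" "N = scale c ?L'" using V_two[OF Y l(3) N(1)] by blast
  have s1: "scale (pi ^ i) ?L \<subseteq> M" using pos_scale_sub[OF M(2), of "pi ^ i"] by simp
  have s2: "scale (pi ^ (n - i)) M \<subseteq> N" using pos_scale_sub[OF N(2), of "pi ^ (n - i)"] by simp
  have "scale (pi ^ (n - i)) (scale (pi ^ i) ?L) \<subseteq> N" using scale_mono_set[OF s1] s2 by blast
  hence "scale (pi ^ n) ?L \<subseteq> scale c ?L'" using c i by (simp add: scale_scale power_add[symmetric])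
  hence "scale (inverse c) (scale (pi ^ n) ?L) \<subseteq> ?L'" using scale_mono_set[of _ _ "inverse c"] c
    by (metis scale_scale field_class.field_inverse scale_1 subset_trans order_refl)
  hence "scale (inverse c * pi ^ n) ?L \<subseteq> ?L'" by (simp add: scale_scale)
  hence "int n \<le> v (inverse c * pi ^ n)" using pos_scale_sub[OF pL] c by simp
  hence vc1: "v c \<le> 0" using c by (simp add: vmult vinv)
  have vc2: "0 \<le> v c"
  proof (rule ccontr)
    assume "\<not> 0 \<le> v c"
    hence h: "1 \<le> v (inverse c)" using c by (simp add: vinv)
    have "N \<subseteq> ?L" using pos_sub[OF N(2)] pos_sub[OF M(2)] by blast
    hence "scale (inverse c) N \<subseteq> scale (inverse c) ?L" by (rule scale_mono_set)
    moreover have "scale (inverse c) N = ?L'" using c by (simp add: scale_scale)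
    moreover have "scale (inverse c) ?L \<subseteq> scale pi ?L" using scale_le[of "inverse c" pi u w] c h l(1) pi by simp
    ultimately show False using pos_not_pi[OF pL] by blast
  qed
  have NL: "N = ?L'" using c vc1 vc2 scale_unit[of c u "sm (pi ^ n) w"] det2_pi[OF l(1)] by simp
  let ?M0 = "Lat u (sm (pi ^ i) w)"
  have "u \<in> M" using pos_sub[OF N(2)] NL Lat_gen(1) by blast
  moreover have "sm (pi ^ i) w \<in> scale (pi ^ i) ?L" by (simp add: scale_Lat Lat_gen)
  hence "sm (pi ^ i) w \<in> M" using s1 by blast
  moreover obtain u2 w2 where b2: "det2 u2 w2 \<noteq> 0" "?L = Lat u2 w2" "M = Lat u2 (sm (pi ^ i) w2)" using M(2) unfolding pos_def by blast
  ultimately have sub: "?M0 \<subseteq> M" using Lat_sub by metis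
  have "v (det2 u w) = v (det2 u2 w2)" using det_eq_lat[OF l(1) b2(1) b2(2)] .
  hence "?M0 = M" using Lat_eq_det[OF det2_pi[OF b2(1)] sub[unfolded b2(3)] det2_pi[OF l(1)]] b2(1) l(1)
    by (simp add: vmult b2(3))
  thus ?thesis using V_eq[OF Z M(1)] by simp
qed

end


definition mdet :: "'a::field \<times> 'a \<times> 'a \<times> 'a \<Rightarrow> 'a" where
  "mdet M = (case M of (a, b, c, d) \<Rightarrow> a * d - b * c)"
definition minv :: "'a::field \<times> 'a \<times> 'a \<times> 'a \<Rightarrow> 'a \<times> 'a \<times> 'a \<times> 'a" where
  "minv M = (case M of (a, b, c, d) \<Rightarrow> (d / mdet M, - b / mdet M, - c / mdet M, a / mdet M))"
definition mmul :: "'a::field \<times> 'a \<times> 'a \<times> 'a \<Rightarrow> 'a \<times> 'a \<times> 'a \<times> 'a \<Rightarrow> 'a \<times> 'a \<times> 'a \<times> 'a" where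
  "mmul M N = (case M of (a, b, c, d) \<Rightarrow> case N of (a', b', c', d') \<Rightarrow>
      (a * a' + b * c', a * b' + b * d', c * a' + d * c', c * b' + d * d'))"

lemma invertible_mdet: "invertible_mat M \<longleftrightarrow> mdet M \<noteq> 0"
  unfolding invertible_mat_def mdet_def by (cases M) auto

lemma lin_mmul: "lin_act (mmul M N) z = lin_act M (lin_act N z)"
  unfolding lin_act_def mmul_def by (cases M; cases N; cases z) (simp add: algebra_simps)

lemma mdet_mmul: "mdet (mmul M N) = mdet M * mdet N"
  unfolding mdet_def mmul_def by (cases M; cases N) (simp add: algebra_simps)

lemma lin_minv: "mdet M \<noteq> 0 \<Longrightarrow> lin_act (minv M) (lin_act M z) = z"
proof -
  assume h: "mdet M \<noteq> 0"
  obtain a b c d where M: "M = (a,b,c,d)" by (cases M) auto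
  obtain z1 z2 where z: "z = (z1,z2)" by (cases z) auto
  define t where "t = a * d - b * c"
  have D: "t \<noteq> 0" using h M by (simp add: mdet_def t_def)
  have e: "d * (a * z1 + b * z2) - b * (c * z1 + d * z2) = t * z1"
       "a * (c * z1 + d * z2) - c * (a * z1 + b * z2) = t * z2" by (simp_all add: algebra_simps t_def)
  have "d / t * (a * z1 + b * z2) + - b / t * (c * z1 + d * z2) = (d * (a * z1 + b * z2) - b * (c * z1 + d * z2)) / t"
       "- c / t * (a * z1 + b * z2) + a / t * (c * z1 + d * z2) = (a * (c * z1 + d * z2) - c * (a * z1 + b * z2)) / t"
    using D by (simp_all add: field_simps)
  hence "d / t * (a * z1 + b * z2) + - b / t * (c * z1 + d * z2) = z1"
        "- c / t * (a * z1 + b * z2) + a / t * (c * z1 + d * z2) = z2"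
    using e D by simp_all
  thus ?thesis unfolding M z minv_def lin_act_def mdet_def t_def by simp
qed

lemma minv_minv_lin: "mdet M \<noteq> 0 \<Longrightarrow> lin_act M (lin_act (minv M) z) = z"
proof -
  assume h: "mdet M \<noteq> 0"
  obtain a b c d where M: "M = (a,b,c,d)" by (cases M) auto
  obtain z1 z2 where z: "z = (z1,z2)" by (cases z) auto
  define t where "t = a * d - b * c"
  have D: "t \<noteq> 0" using h M by (simp add: mdet_def t_def)
  have e: "a * (d * z1 - b * z2) + b * (a * z2 - c * z1) = t * z1"
       "c * (d * z1 - b * z2) + d * (a * z2 - c * z1) = t * z2" by (simp_all add: algebra_simps t_def)
  have "a * (d / t * z1 + - b / t * z2) + b * (- c / t * z1 + a / t * z2) = (a * (d * z1 - b * z2) + b * (a * z2 - c * z1)) / t"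
       "c * (d / t * z1 + - b / t * z2) + d * (- c / t * z1 + a / t * z2) = (c * (d * z1 - b * z2) + d * (a * z2 - c * z1)) / t"
    using D by (simp_all add: field_simps)
  hence "a * (d / t * z1 + - b / t * z2) + b * (- c / t * z1 + a / t * z2) = z1"
        "c * (d / t * z1 + - b / t * z2) + d * (- c / t * z1 + a / t * z2) = z2"
    using e D by simp_all
  thus ?thesis unfolding M z minv_def lin_act_def mdet_def t_def by simp
qed

lemma mdet_minv: "mdet M \<noteq> 0 \<Longrightarrow> mdet (minv M) \<noteq> 0"
proof -
  assume h: "mdet M \<noteq> 0"
  obtain a b c d where M: "M = (a,b,c,d)" by (cases M) auto
  define t where "t = a * d - b * c"
  have D: "t \<noteq> 0" using h M by (simp add: mdet_def t_def)
  have "d / t * (a / t) - - b / t * (- c / t) = (a * d - b * c) / (t * t)"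
    using D by (simp add: field_simps)
  also have "\<dots> = 1 / t" using D by (simp add: t_def[symmetric])
  finally have "d / t * (a / t) - - b / t * (- c / t) \<noteq> 0" using D by simp
  thus ?thesis unfolding M minv_def mdet_def t_def by simp
qed

lemma mat_vact_comp: "mat_vact M (mat_vact N X) = mat_vact (mmul M N) X"
  unfolding mat_vact_def by (simp add: image_image lin_mmul[symmetric] image_comp comp_def)

lemma mat_vact_minv: "mdet M \<noteq> 0 \<Longrightarrow> mat_vact (minv M) (mat_vact M X) = X"
  unfolding mat_vact_def by (simp add: image_image lin_minv)

lemma mat_vact_minv2: "mdet M \<noteq> 0 \<Longrightarrow> mat_vact M (mat_vact (minv M) X) = X"
  unfolding mat_vact_def by (simp add: image_image minv_minv_lin)

context VF begin

lemma lin_vp: "lin_act M (vp z z') = vp (lin_act M z) (lin_act M z')"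
  unfolding lin_act_def vp_def by (cases M; cases z; cases z') (simp add: algebra_simps)

lemma lin_sm: "lin_act M (sm c z) = sm c (lin_act M z)"
  unfolding lin_act_def sm_def by (cases M; cases z) (simp add: algebra_simps)

lemma lin_det: "det2 (lin_act M u) (lin_act M w) = mdet M * det2 u w"
  unfolding lin_act_def det2_def mdet_def by (cases M; cases u; cases w) (simp add: algebra_simps)

lemma lin_Lat: "lin_act M ` Lat u w = Lat (lin_act M u) (lin_act M w)"
proof (intro set_eqI iffI)
  fix z assume "z \<in> lin_act M ` Lat u w"
  then obtain a b where "Ov a" "Ov b" "z = lin_act M (vp (sm a u) (sm b w))" unfolding Lat_def by blast
  thus "z \<in> Lat (lin_act M u) (lin_act M w)" unfolding Lat_def lin_vp lin_sm by blast
next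
  fix z assume "z \<in> Lat (lin_act M u) (lin_act M w)"
  then obtain a b where "Ov a" "Ov b" "z = vp (sm a (lin_act M u)) (sm b (lin_act M w))" unfolding Lat_def by blast
  hence "z = lin_act M (vp (sm a u) (sm b w))" "vp (sm a u) (sm b w) \<in> Lat u w"
    unfolding Lat_def lin_vp lin_sm by blast+
  thus "z \<in> lin_act M ` Lat u w" by blast
qed

lemma lin_scale: "lin_act M ` scale (c::'a) L = scale c (lin_act M ` L)"
  unfolding scale_sm image_image lin_sm by simp

lemma mat_vact_hclass: "mat_vact M (hclass v L) = hclass v (lin_act M ` L)"
proof (intro set_eqI iffI)
  fix X assume "X \<in> mat_vact M (hclass v L)"
  then obtain L0 where L0: "L0 \<in> hclass v L" "X = lin_act M ` L0" unfolding mat_vact_def by blast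
  then obtain c where "c \<noteq> 0" "X = lin_act M ` scale c L" unfolding hclass_mem by blast
  thus "X \<in> hclass v (lin_act M ` L)" unfolding hclass_mem lin_scale by blast
next
  fix X assume "X \<in> hclass v (lin_act M ` L)"
  then obtain c where c: "c \<noteq> 0" "X = lin_act M ` scale c L" unfolding hclass_mem lin_scale by blast
  have "scale c L \<in> hclass v L" unfolding hclass_mem using c(1) by blast
  thus "X \<in> mat_vact M (hclass v L)" unfolding mat_vact_def
    by (rule image_eqI[where f = "\<lambda>L. lin_act M ` L", OF c(2)])
qed

lemma islat_lin: "mdet M \<noteq> 0 \<Longrightarrow> islat L \<Longrightarrow> islat (lin_act M ` L)"
proof -
  assume a: "mdet M \<noteq> 0" "islat L"
  then obtain u w where h: "det2 u w \<noteq> 0" "L = Lat u w" unfolding islat_def by blast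
  have "lin_act M ` L = Lat (lin_act M u) (lin_act M w)" using h lin_Lat by simp
  moreover have "det2 (lin_act M u) (lin_act M w) \<noteq> 0" using a h by (simp add: lin_det)
  ultimately show ?thesis unfolding islat_def by blast
qed

lemma mat_vact_V: "mdet M \<noteq> 0 \<Longrightarrow> X \<in> V \<Longrightarrow> mat_vact M X \<in> V"
proof -
  assume a: "mdet M \<noteq> 0" "X \<in> V"
  then obtain L where "islat L" "X = hclass v L" unfolding V_iff by blast
  thus ?thesis using mat_vact_hclass islat_lin[OF a(1)] hclass_V by simp
qed

lemma mem_mat_vact: "L \<in> X \<Longrightarrow> lin_act M ` L \<in> mat_vact M X"
  unfolding mat_vact_def by blast

lemma pos_lin: "mdet M \<noteq> 0 \<Longrightarrow> pos L L' n \<Longrightarrow> pos (lin_act M ` L) (lin_act M ` L') n"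
proof -
  assume a: "mdet M \<noteq> 0" "pos L L' n"
  then obtain u w where h: "det2 u w \<noteq> 0" "L = Lat u w" "L' = Lat u (sm (pi ^ n) w)" unfolding pos_def by blast
  have "lin_act M ` L = Lat (lin_act M u) (lin_act M w)"
       "lin_act M ` L' = Lat (lin_act M u) (sm (pi ^ n) (lin_act M w))" using h by (simp_all add: lin_Lat lin_sm)
  moreover have "det2 (lin_act M u) (lin_act M w) \<noteq> 0" using a h by (simp add: lin_det)
  ultimately show ?thesis unfolding pos_def by blast
qed

lemma R_lin: "mdet M \<noteq> 0 \<Longrightarrow> R X Y n \<Longrightarrow> R (mat_vact M X) (mat_vact M Y) n"
proof -
  assume a: "mdet M \<noteq> 0" "R X Y n"
  then obtain L L' where h: "L \<in> X" "L' \<in> Y" "pos L L' n" unfolding R_def by blast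
  have "lin_act M ` L \<in> mat_vact M X" "lin_act M ` L' \<in> mat_vact M Y" using h mem_mat_vact by blast+
  thus ?thesis unfolding R_def using pos_lin[OF a(1) h(3)] by blast
qed

lemma D_mat: "mdet M \<noteq> 0 \<Longrightarrow> X \<in> V \<Longrightarrow> Y \<in> V \<Longrightarrow> D (mat_vact M X) (mat_vact M Y) = D X Y"
  using D_eq[OF mat_vact_V mat_vact_V R_lin[OF _ D_R]] by blast

definition gM where "gM M X = (if X \<in> V then mat_vact M X else X)"

lemma gM_in: "X \<in> V \<Longrightarrow> gM M X = mat_vact M X" unfolding gM_def by simp

lemma gM_aut: assumes md: "mdet M \<noteq> 0" shows "BT_aut v (gM M)"
proof -
  have mi: "mdet (minv M) \<noteq> 0" using mdet_minv[OF md] .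
  have "bij_betw (gM M) V V"
  proof (rule bij_betw_byWitness[where f' = "gM (minv M)"])
    show "\<forall>a\<in>V. gM (minv M) (gM M a) = a"
      using md mi by (simp add: gM_in mat_vact_V mat_vact_minv)
    show "\<forall>a\<in>V. gM M (gM (minv M) a) = a"
      using md mi by (simp add: gM_in mat_vact_V mat_vact_minv2)
    show "gM M ` V \<subseteq> V" using md by (auto simp: gM_in mat_vact_V)
    show "gM (minv M) ` V \<subseteq> V" using mi by (auto simp: gM_in mat_vact_V)
  qed
  moreover have "\<forall>X\<in>V. \<forall>Y\<in>V. BT_dist v (gM M X) (gM M Y) = BT_dist v X Y"
    using md by (simp add: gM_in BT_dist_D mat_vact_V D_mat)
  moreover have "\<forall>X. X \<notin> V \<longrightarrow> gM M X = X" by (simp add: gM_def)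
  ultimately show ?thesis unfolding BT_aut_def by blast
qed

lemma gM_G: assumes md: "mdet M \<noteq> 0" shows "gM M \<in> G_hat v e"
proof -
  have "\<forall>y\<in>edge_ball v y1 y2 e. gM M y = mat_vact M y" for y1 y2
    unfolding edge_ball_def by (simp add: gM_in)
  moreover have "invertible_mat M" using md invertible_mdet by blast
  ultimately show ?thesis unfolding G_hat_def using gM_aut[OF md] by blast
qed

lemma aut_V: "BT_aut v g \<Longrightarrow> X \<in> V \<Longrightarrow> g X \<in> V"
  unfolding BT_aut_def bij_betw_def by blast

lemma aut_D: "BT_aut v g \<Longrightarrow> X \<in> V \<Longrightarrow> Y \<in> V \<Longrightarrow> D (g X) (g Y) = D X Y"
  using aut_V BT_dist_D unfolding BT_aut_def by metis

lemma aut_inj: "BT_aut v g \<Longrightarrow> X \<in> V \<Longrightarrow> Y \<in> V \<Longrightarrow> g X = g Y \<Longrightarrow> X = Y"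
  unfolding BT_aut_def bij_betw_def inj_on_def by blast

lemma aut_out: "BT_aut v g \<Longrightarrow> X \<notin> V \<Longrightarrow> g X = X"
  unfolding BT_aut_def by blast

lemma aut_bij: "BT_aut v g \<Longrightarrow> bij_betw g V V" unfolding BT_aut_def by blast

lemma aut_dist: "BT_aut v g \<Longrightarrow> X \<in> V \<Longrightarrow> Y \<in> V \<Longrightarrow> BT_dist v (g X) (g Y) = BT_dist v X Y"
  unfolding BT_aut_def by blast

lemma aut_comp: "BT_aut v g \<Longrightarrow> BT_aut v h \<Longrightarrow> BT_aut v (g \<circ> h)"
proof -
  assume g: "BT_aut v g" and h: "BT_aut v h"
  have "bij_betw (g \<circ> h) V V" using bij_betw_trans[OF aut_bij[OF h] aut_bij[OF g]] .
  moreover have "\<forall>X\<in>V. \<forall>Y\<in>V. BT_dist v ((g \<circ> h) X) ((g \<circ> h) Y) = BT_dist v X Y"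
  proof (intro ballI)
    fix X Y assume "X \<in> V" "Y \<in> V"
    thus "BT_dist v ((g \<circ> h) X) ((g \<circ> h) Y) = BT_dist v X Y"
      using aut_dist[OF g aut_V[OF h] aut_V[OF h]] aut_dist[OF h] by simp
  qed
  moreover have "\<forall>X. X \<notin> V \<longrightarrow> (g \<circ> h) X = X" using aut_out[OF g] aut_out[OF h] by simp
  ultimately show ?thesis unfolding BT_aut_def by blast
qed

definition ginv where "ginv g X = (if X \<in> V then inv_into V g X else X)"

lemma ginv_left: assumes g: "BT_aut v g" shows "ginv g (g X) = X"
proof (cases "X \<in> V")
  case True
  hence "g X \<in> V" using aut_V[OF g] by blast
  thus ?thesis unfolding ginv_def using bij_betw_inv_into_left[OF aut_bij[OF g] True] by simp
next
  case False thus ?thesis unfolding ginv_def using aut_out[OF g False] by simp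
qed

lemma ginv_right: assumes g: "BT_aut v g" shows "g (ginv g X) = X"
proof (cases "X \<in> V")
  case True
  thus ?thesis unfolding ginv_def using bij_betw_inv_into_right[OF aut_bij[OF g] True] by simp
next
  case False thus ?thesis unfolding ginv_def using aut_out[OF g False] by simp
qed

lemma ginv_V: assumes g: "BT_aut v g" and X: "X \<in> V" shows "ginv g X \<in> V"
proof -
  have "X \<in> g ` V" using bij_betw_imp_surj_on[OF aut_bij[OF g]] X by simp
  thus ?thesis unfolding ginv_def using X by (simp add: inv_into_into)
qed

lemma ginv_aut: assumes g: "BT_aut v g" shows "BT_aut v (ginv g)"
proof -
  have "bij_betw (ginv g) V V"
    by (rule bij_betw_byWitness[where f' = g]) (auto simp: ginv_left ginv_right g ginv_V aut_V)
  moreover have "\<forall>X\<in>V. \<forall>Y\<in>V. BT_dist v (ginv g X) (ginv g Y) = BT_dist v X Y"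
  proof (intro ballI)
    fix X Y assume "X \<in> V" "Y \<in> V"
    thus "BT_dist v (ginv g X) (ginv g Y) = BT_dist v X Y"
      using aut_dist[OF g ginv_V[OF g] ginv_V[OF g], of X Y] ginv_right[OF g] by simp
  qed
  ultimately show ?thesis unfolding BT_aut_def by (simp add: ginv_def)
qed

lemma edge_ball_aut:
  assumes g: "BT_aut v g" and y: "y \<in> edge_ball v y1 y2 e" and y12: "y1 \<in> V" "y2 \<in> V"
  shows "g y \<in> edge_ball v (g y1) (g y2) e"
  using y g y12 aut_V unfolding edge_ball_def BT_aut_def by auto

lemma G_aut: "g \<in> G_hat v e \<Longrightarrow> BT_aut v g" unfolding G_hat_def by blast

lemma G_comp: assumes g: "g \<in> G_hat v e" and h: "h \<in> G_hat v e" shows "g \<circ> h \<in> G_hat v e"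
proof -
  have ga: "BT_aut v g" and ha: "BT_aut v h" using g h G_aut by blast+
  have "BT_adj v y1 y2 \<Longrightarrow> \<exists>M. invertible_mat M \<and> (\<forall>y\<in>edge_ball v y1 y2 e. (g \<circ> h) y = mat_vact M y)" for y1 y2
  proof -
    assume a: "BT_adj v y1 y2"
    have y12: "y1 \<in> V" "y2 \<in> V" "D y1 y2 = 1" using a adj_D by blast+
    obtain M1 where M1: "invertible_mat M1" "\<forall>y\<in>edge_ball v y1 y2 e. h y = mat_vact M1 y"
      using h a unfolding G_hat_def by blast
    have "h y1 \<in> V" "h y2 \<in> V" "D (h y1) (h y2) = 1" using y12 aut_V[OF ha] aut_D[OF ha] by simp_all
    hence "BT_adj v (h y1) (h y2)" using adj_D by blast
    then obtain M2 where M2: "invertible_mat M2" "\<forall>y\<in>edge_ball v (h y1) (h y2) e. g y = mat_vact M2 y"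
      using g unfolding G_hat_def by blast
    have "\<forall>y\<in>edge_ball v y1 y2 e. (g \<circ> h) y = mat_vact (mmul M2 M1) y"
    proof
      fix y assume y: "y \<in> edge_ball v y1 y2 e"
      have "h y \<in> edge_ball v (h y1) (h y2) e" using edge_ball_aut[OF ha y y12(1,2)] .
      hence e1: "g (h y) = mat_vact M2 (h y)" using M2(2) by blast
      have e2: "h y = mat_vact M1 y" using M1(2) y by blast
      show "(g \<circ> h) y = mat_vact (mmul M2 M1) y" using e1 e2 by (simp add: mat_vact_comp)
    qed
    moreover have "invertible_mat (mmul M2 M1)" using M1 M2 by (simp add: invertible_mdet mdet_mmul)
    ultimately show ?thesis by blast
  qed
  thus ?thesis unfolding G_hat_def using aut_comp[OF ga ha] by blast
qed

lemma G_inv: assumes g: "g \<in> G_hat v e" shows "ginv g \<in> G_hat v e"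
proof -
  have ga: "BT_aut v g" using g G_aut by blast
  have ia: "BT_aut v (ginv g)" using ginv_aut[OF ga] .
  have "BT_adj v y1 y2 \<Longrightarrow> \<exists>M. invertible_mat M \<and> (\<forall>y\<in>edge_ball v y1 y2 e. ginv g y = mat_vact M y)" for y1 y2
  proof -
    assume a: "BT_adj v y1 y2"
    have y12: "y1 \<in> V" "y2 \<in> V" "D y1 y2 = 1" using a adj_D by blast+
    have "ginv g y1 \<in> V" "ginv g y2 \<in> V" "D (ginv g y1) (ginv g y2) = 1" using y12 aut_V[OF ia] aut_D[OF ia] by simp_all
    hence "BT_adj v (ginv g y1) (ginv g y2)" using adj_D by blast
    then obtain M where M: "invertible_mat M" "\<forall>y\<in>edge_ball v (ginv g y1) (ginv g y2) e. g y = mat_vact M y"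
      using g unfolding G_hat_def by blast
    have md: "mdet M \<noteq> 0" using M(1) invertible_mdet by blast
    have "\<forall>y\<in>edge_ball v y1 y2 e. ginv g y = mat_vact (minv M) y"
    proof
      fix y assume "y \<in> edge_ball v y1 y2 e"
      hence "ginv g y \<in> edge_ball v (ginv g y1) (ginv g y2) e" using edge_ball_aut[OF ia _ y12(1,2)] by blast
      hence "g (ginv g y) = mat_vact M (ginv g y)" using M(2) by blast
      hence "mat_vact (minv M) y = ginv g y" using ginv_right[OF ga] mat_vact_minv[OF md] by metis
      thus "ginv g y = mat_vact (minv M) y" by simp
    qed
    moreover have "invertible_mat (minv M)" using md mdet_minv invertible_mdet by blast
    ultimately show ?thesis by blast
  qed
  thus ?thesis unfolding G_hat_def using ia by blast
qed

lemma G_id: "id \<in> G_hat v e"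
proof -
  have "gM (1,0,0,1) = id"
  proof
    fix X show "gM (1,0,0,1) X = id X"
      unfolding gM_def mat_vact_def lin_act_def by (simp add: case_prod_beta)
  qed
  thus ?thesis using gM_G[of "(1,0,0,1)"] by (simp add: mdet_def)
qed

end

context VF begin

lemma pos_basis: "pos L L' n \<Longrightarrow> \<exists>a b. det2 a b \<noteq> 0 \<and> L = Lat a b \<and> L' = Lat a (sm (pi ^ n) b)"
  unfolding pos_def by blast

lemma D_nat: "\<forall>i j. D (y i) (y j) = nat \<bar>int i - int j\<bar> \<Longrightarrow> D (y i) (y j) = nat \<bar>int i - int j\<bar>" by blast

lemma Lat_chain_sub: "Lat a (sm (pi ^ Suc n) b) \<subseteq> Lat a (sm (pi ^ n) b)"
proof -
  have h: "sm pi (sm (pi ^ n) b) \<in> Lat a (sm (pi ^ n) b)" by (rule Lat_sm[OF Lat_gen(2)]) (simp add: dv_def pi)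
  have "sm (pi ^ Suc n) b \<in> Lat a (sm (pi ^ n) b)" using h by simp
  thus ?thesis by (rule Lat_sub[OF Lat_gen(1)])
qed

lemma ray_chain:
  assumes yV: "\<forall>n. y n \<in> V" and yD: "\<forall>i j. D (y i) (y j) = nat \<bar>int i - int j\<bar>"
    and L: "L \<in> y 0"
    and Ln: "\<forall>n. Ln n \<in> y n \<and> pos L (Ln n) n"
  shows "Ln (Suc n) \<subseteq> Ln n"
proof -
  have ps: "pos L (Ln (Suc n)) (Suc n)" using Ln by blast
  obtain a b where ab: "det2 a b \<noteq> 0" "L = Lat a b" "Ln (Suc n) = Lat a (sm (pi ^ Suc n) b)"
    using pos_basis[OF ps] by blast
  have d1: "D (y 0) (y n) = n" using yD by simp
  have d2: "D (y n) (y (Suc n)) = Suc n - n" using yD by simp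
  have m0: "Lat a b \<in> y 0" using ab L by simp
  have m1: "Lat a (sm (pi ^ Suc n) b) \<in> y (Suc n)" using ab(3) Ln by metis
  have "y n = hclass v (Lat a (sm (pi ^ n) b))"
    by (rule geo_unique[OF yV[rule_format] yV[rule_format] yV[rule_format] ab(1) m0 m1 d1 d2]) simp
  hence mem: "Lat a (sm (pi ^ n) b) \<in> y n" using in_hclass by simp
  have p: "pos L (Lat a (sm (pi ^ n) b)) n" unfolding pos_def using ab by blast
  have Lnn: "Ln n \<in> y n" "pos L (Ln n) n" using Ln by blast+
  obtain d where d: "d \<noteq> 0" "Lat a (sm (pi ^ n) b) = scale d (Ln n)" using V_two[OF yV[rule_format] Lnn(1) mem] by blast
  have "Lat a (sm (pi ^ n) b) = Ln n" using pos_unique_rep[OF Lnn(2) p d] by blast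
  moreover have "Lat a (sm (pi ^ Suc n) b) \<subseteq> Lat a (sm (pi ^ n) b)" by (rule Lat_chain_sub)
  ultimately show ?thesis using ab(3) by simp
qed

lemma ray_chain2:
  assumes "\<And>n. Ln (Suc n) \<subseteq> Ln n"
  shows "n \<le> m \<Longrightarrow> Ln m \<subseteq> Ln n"
proof (induction m)
  case 0 thus ?case by simp
next
  case (Suc m)
  show ?case
  proof (cases "n = Suc m")
    case True thus ?thesis by simp
  next
    case False
    hence "n \<le> m" using Suc.prems by simp
    hence "Ln m \<subseteq> Ln n" using Suc.IH by simp
    thus ?thesis using assms[of m] by (rule subset_trans[rotated])
  qed
qed

lemma vid1: "vp e1 (sm a e2) = vp (vp e1 (sm b e2)) (sm (a - b) e2)"
  by (simp add: vp_def sm_def algebra_simps)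

lemma Lat_diff: "z \<in> Lat u w \<Longrightarrow> z' \<in> Lat u w \<Longrightarrow> vp z (sm (-1) z') \<in> Lat u w"
  using Lat_add Lat_sm[of z' u w "-1"] by (simp add: dv_def)

lemma ray_struct:
  assumes comp: "val_complete v"
    and yV: "\<forall>n. y n \<in> V" and yD: "\<forall>i j. D (y i) (y j) = nat \<bar>int i - int j\<bar>"
  shows "\<exists>u e2. det2 u e2 \<noteq> 0 \<and> (\<forall>n. y n = hclass v (Lat u (sm (pi ^ n) e2)))"
proof -
  have "R (y 0) (y 1) 1" using D_R[OF yV[rule_format] yV[rule_format], of 0 1] yD by simp
  then obtain L L1 where LL: "L \<in> y 0" "L1 \<in> y 1" "pos L L1 1" unfolding R_def by blast
  obtain e1 e2 where e: "det2 e1 e2 \<noteq> 0" "L = Lat e1 e2" "L1 = Lat e1 (sm pi e2)"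
    using pos_basis[OF LL(3)] by auto
  have exn: "\<exists>M. M \<in> y n \<and> pos L M n" for n
  proof -
    have "D (y 0) (y n) = n" using yD by simp
    hence "\<exists>L'\<in>y n. pos L L' n" 
      using R_strong[OF yV[rule_format] yV[rule_format] D_R[OF yV[rule_format] yV[rule_format]] LL(1), of n] by simp
    thus ?thesis by blast
  qed
  define Ln where "Ln n = (SOME M. M \<in> y n \<and> pos L M n)" for n
  have Ln: "\<forall>n. Ln n \<in> y n \<and> pos L (Ln n) n"
  proof
    fix n show "Ln n \<in> y n \<and> pos L (Ln n) n" unfolding Ln_def by (rule someI_ex[OF exn])
  qed
  have ch: "Ln (Suc n) \<subseteq> Ln n" for n using ray_chain[OF yV yD LL(1) Ln] .
  have ch2: "n \<le> m \<Longrightarrow> Ln m \<subseteq> Ln n" for n m using ray_chain2[of Ln, OF ch] by blast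
  have L1eq: "Ln 1 = L1"
  proof -
    have l1: "Ln 1 \<in> y 1" "pos L (Ln 1) 1" using Ln by blast+
    obtain d where d: "d \<noteq> 0" "L1 = scale d (Ln 1)" using V_two[OF yV[rule_format] l1(1) LL(2)] by blast
    show ?thesis using pos_unique_rep[OF l1(2) LL(3) d] by simp
  qed
  have De: "v (det2 e1 e2) = v (det2 e1 e2)" ..
  have nf: "\<exists>t. Ov t \<and> Ln n = Lat (vp e1 (sm t e2)) (sm (pi ^ n) e2)" for n
  proof (cases "n = 0")
    case True
    have "pos L (Ln 0) 0" using Ln by blast
    then obtain a b where "L = Lat a b" "Ln 0 = Lat a (sm (pi ^ 0) b)" using pos_basis by blast
    hence "Ln 0 = L" by simp
    thus ?thesis using True e(2) by (intro exI[of _ 0]) (simp add: sm_def vp_def)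
  next
    case False
    have pn: "pos L (Ln n) n" using Ln by blast
    obtain a b where ab: "det2 a b \<noteq> 0" "L = Lat a b" "Ln n = Lat a (sm (pi ^ n) b)" using pos_basis[OF pn] by blast
    have aLn: "a \<in> Ln n" unfolding ab(3) by (rule Lat_gen(1))
    hence "a \<in> L1" using ch2[of 1 n] False L1eq by auto
    have "a \<in> L" unfolding ab(2) by (rule Lat_gen(1))
    then obtain al be where abe: "Ov al" "Ov be" "a = vp (sm al e1) (sm be e2)" unfolding e(2) Lat_def by blast
    have Dpi: "det2 e1 (sm pi e2) \<noteq> 0" using e(1) by simp
    have "a = vp (sm al e1) (sm (be / pi) (sm pi e2))" using abe(3) by simp
    hence "vp (sm al e1) (sm (be / pi) (sm pi e2)) \<in> Lat e1 (sm pi e2)" using \<open>a \<in> L1\<close> e(3) by simp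
    hence "Ov (be / pi)" using mem_Lat_comb[OF Dpi, of al "be / pi"] by blast
    hence be1: "dv 1 be" using pi by (cases "be = 0") (auto simp: dv_def vdiv)
    have "\<not> dv 1 al"
    proof
      assume "dv 1 al"
      hence "Ov (al / pi)" using pi by (cases "al = 0") (auto simp: dv_def vdiv)
      moreover have "Ov (be / pi)" using be1 pi by (cases "be = 0") (auto simp: dv_def vdiv)
      moreover have "a = vp (sm (al / pi) (sm pi e1)) (sm (be / pi) (sm pi e2))" using abe(3) by simp
      moreover have "det2 (sm pi e1) (sm pi e2) \<noteq> 0" using e(1) by simp
      ultimately have "a \<in> Lat (sm pi e1) (sm pi e2)" using mem_Lat_comb[of "sm pi e1" "sm pi e2" "al / pi" "be / pi"] by simp
      hence "a \<in> scale pi L" using e(2) by (simp add: scale_Lat)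
      thus False using u_notin_pi[OF ab(1)] ab(2) by simp
    qed
    hence al: "al \<noteq> 0" "v al = 0" using abe(1) by (auto simp: dv_def)
    define t where "t = be / al"
    have to: "Ov t" unfolding t_def using abe(2) al by (cases "be = 0") (auto simp: dv_def vdiv)
    define z where "z = vp e1 (sm t e2)"
    have za: "z = sm (inverse al) a" unfolding z_def t_def abe(3) using al by (simp add: sm_def vp_def field_simps)
    have zLn: "z \<in> Ln n" using Lat_sm[OF aLn[unfolded ab(3)] unit_inv[OF al]] za ab(3) by simp
    have "sm (pi ^ n) e2 \<in> scale (pi ^ n) L" unfolding e(2) scale_Lat using Lat_gen(2) by blast
    moreover have "scale (pi ^ n) L \<subseteq> Ln n" using pos_scale_sub[of L "Ln n" n "pi ^ n"] Ln by simp
    ultimately have "sm (pi ^ n) e2 \<in> Ln n" by blast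
    hence sub: "Lat z (sm (pi ^ n) e2) \<subseteq> Lat a (sm (pi ^ n) b)" using zLn ab(3) Lat_sub by simp
    have dz: "det2 z (sm (pi ^ n) e2) = pi ^ n * det2 e1 e2" unfolding z_def by simp
    have "v (det2 a b) = v (det2 e1 e2)" using det_eq_lat[OF ab(1) e(1)] ab(2) e(2) by simp
    hence "Lat z (sm (pi ^ n) e2) = Lat a (sm (pi ^ n) b)"
      using Lat_eq_det[OF det2_pi[OF ab(1)] sub] dz e(1) ab(1) by (simp add: vmult)
    thus ?thesis using to ab(3) unfolding z_def by (intro exI[of _ t]) simp
  qed
  define s where "s n = (SOME t. Ov t \<and> Ln n = Lat (vp e1 (sm t e2)) (sm (pi ^ n) e2))" for n
  have s: "Ov (s n) \<and> Ln n = Lat (vp e1 (sm (s n) e2)) (sm (pi ^ n) e2)" for n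
    unfolding s_def by (rule someI_ex[OF nf])
  have cauchy: "dv (int n) (s m - s n)" if "n \<le> m" for n m
  proof -
    let ?z = "vp e1 (sm (s n) e2)"
    have Dn: "det2 ?z (sm (pi ^ n) e2) \<noteq> 0" using e(1) by simp
    have "vp e1 (sm (s m) e2) \<in> Ln m" using s[of m] Lat_gen(1) by simp
    hence "vp e1 (sm (s m) e2) \<in> Ln n" using ch2[OF that] by blast
    moreover have "vp e1 (sm (s m) e2) = vp (sm 1 ?z) (sm ((s m - s n) / pi ^ n) (sm (pi ^ n) e2))"
      by (simp add: vid1[of e1 "s m" e2 "s n"])
    ultimately have "vp (sm 1 ?z) (sm ((s m - s n) / pi ^ n) (sm (pi ^ n) e2)) \<in> Lat ?z (sm (pi ^ n) e2)"
      using s[of n] by simp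
    hence "Ov ((s m - s n) / pi ^ n)" using mem_Lat_comb[OF Dn, of 1 "(s m - s n) / pi ^ n"] by blast
    thus ?thesis by (cases "s m - s n = 0") (auto simp: dv_def vdiv)
  qed
  have cs: "\<forall>N::int. \<exists>M. \<forall>m n. M \<le> m \<longrightarrow> M \<le> n \<longrightarrow> s m = s n \<or> N \<le> v (s m - s n)"
  proof
    fix N :: int
    have "s m = s n \<or> N \<le> v (s m - s n)" if "nat N \<le> m" "nat N \<le> n" for m n
    proof (cases "n \<le> m")
      case True
      hence "dv (int n) (s m - s n)" using cauchy by blast
      thus ?thesis using that by (auto simp: dv_def)
    next
      case False
      hence "dv (int m) (s n - s m)" using cauchy by simp
      hence "dv (int m) (s m - s n)" using dv_neg[of "int m" "s n - s m"] by simp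
      thus ?thesis using that by (auto simp: dv_def)
    qed
    thus "\<exists>M. \<forall>m n. M \<le> m \<longrightarrow> M \<le> n \<longrightarrow> s m = s n \<or> N \<le> v (s m - s n)" by blast
  qed
  obtain sl where sl: "\<forall>N::int. \<exists>M. \<forall>n. M \<le> n \<longrightarrow> s n = sl \<or> N \<le> v (s n - sl)"
  proof -
    have "\<forall>s :: nat \<Rightarrow> 'a. (\<forall>N::int. \<exists>M. \<forall>m n. M \<le> m \<longrightarrow> M \<le> n \<longrightarrow> s m = s n \<or> N \<le> v (s m - s n))
       \<longrightarrow> (\<exists>L. \<forall>N::int. \<exists>M. \<forall>n. M \<le> n \<longrightarrow> s n = L \<or> N \<le> v (s n - L))"
      using comp unfolding val_complete_def .
    hence "\<exists>L. \<forall>N::int. \<exists>M. \<forall>n. M \<le> n \<longrightarrow> s n = L \<or> N \<le> v (s n - L)" using cs by blast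
    thus ?thesis using that by blast
  qed
  have lim: "dv (int n) (sl - s n)" for n
  proof -
    obtain M where M: "\<forall>k. M \<le> k \<longrightarrow> s k = sl \<or> int n \<le> v (s k - sl)" using sl by blast
    let ?m = "max M n"
    have h1: "dv (int n) (s ?m - sl)" using M by (auto simp: dv_def)
    have h2: "dv (int n) (s ?m - s n)" using cauchy by simp
    have h3: "dv (int n) (- (s ?m - sl))" using h1 by (simp only: dv_neg)
    have h4: "dv (int n) (- (s ?m - sl) + (s ?m - s n))" by (rule dv_add[OF h3 h2])
    have eq: "- (s ?m - sl) + (s ?m - s n) = sl - s n" by (simp add: algebra_simps)
    show ?thesis using h4 by (simp only: eq)
  qed
  have "Ov ((sl - s 0) + s 0)" using lim[of 0] s[of 0] by (intro dv_add) simp_all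
  hence slO: "Ov sl" by simp
  define u where "u = vp e1 (sm sl e2)"
  have du: "det2 u e2 \<noteq> 0" unfolding u_def using e(1) by simp
  have "Ln n = Lat u (sm (pi ^ n) e2)" for n
  proof -
    let ?z = "vp e1 (sm (s n) e2)"
    have Dn: "det2 ?z (sm (pi ^ n) e2) \<noteq> 0" using e(1) by simp
    have o: "Ov ((sl - s n) / pi ^ n)" using lim[of n] by (cases "sl - s n = 0") (auto simp: dv_def vdiv)
    have "u = vp ?z (sm ((sl - s n) / pi ^ n) (sm (pi ^ n) e2))" unfolding u_def by (simp add: vid1[of e1 sl e2 "s n"])
    hence "Lat u (sm (pi ^ n) e2) = Lat ?z (sm (pi ^ n) e2)" using Lat_shear[OF o Dn] by simp
    thus ?thesis using s by simp
  qed
  hence "y n = hclass v (Lat u (sm (pi ^ n) e2))" for n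
  proof -
    have "Ln n \<in> y n" using Ln by blast
    thus ?thesis using V_eq[OF yV[rule_format] \<open>Ln n \<in> y n\<close>] \<open>\<And>n. Ln n = Lat u (sm (pi ^ n) e2)\<close> by simp
  qed
  thus ?thesis using du by blast
qed

end


definition Mt :: "'a::field \<times> 'a \<Rightarrow> 'a \<Rightarrow> 'a \<times> 'a \<times> 'a \<times> 'a" where
  "Mt u c = (1 - c * fst u * snd u, c * fst u * fst u, - c * snd u * snd u, 1 + c * fst u * snd u)"

lemma mdet_Mt: "mdet (Mt u c) = 1"
  unfolding Mt_def mdet_def by (simp add: algebra_simps power2_eq_square)

context VF begin

lemma lin_Mt: "lin_act (Mt u c) z = vp z (sm (c * det2 u z) u)"
  unfolding Mt_def lin_act_def vp_def sm_def det2_def by (cases u; cases z) (simp add: algebra_simps)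

lemma gM_hclass: "mdet M \<noteq> 0 \<Longrightarrow> islat L \<Longrightarrow> gM M (hclass v L) = hclass v (lin_act M ` L)"
  using gM_in[OF hclass_V] mat_vact_hclass by simp

definition w0 where "w0 u e2 a = vp (sm a u) e2"
definition NL where "NL u e2 a = Lat (w0 u e2 a) (sm pi u)"
definition Yf where "Yf u e2 a = hclass v (NL u e2 a)"

lemma det_w0: "det2 (w0 u e2 a) u = - det2 u e2"
  unfolding w0_def by (simp add: det2_swap[of e2 u])

lemma L_w0: "Ov a \<Longrightarrow> det2 u e2 \<noteq> 0 \<Longrightarrow> Lat (w0 u e2 a) u = Lat u e2"
proof -
  assume a: "Ov a" "det2 u e2 \<noteq> 0"
  have e: "w0 u e2 a = vp e2 (sm a u)" unfolding w0_def by (rule vp_comm)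
  have "Lat (w0 u e2 a) u = Lat u (w0 u e2 a)" by (rule Lat_swap)
  also have "\<dots> = Lat u e2" unfolding e by (rule Lat_shear2[OF a])
  finally show ?thesis .
qed

lemma pos_NL: "Ov a \<Longrightarrow> det2 u e2 \<noteq> 0 \<Longrightarrow> pos (Lat u e2) (NL u e2 a) 1"
proof -
  assume a: "Ov a" "det2 u e2 \<noteq> 0"
  have "det2 (w0 u e2 a) u \<noteq> 0" using a det_w0 by simp
  moreover have "Lat u e2 = Lat (w0 u e2 a) u" using L_w0[OF a] by simp
  moreover have "NL u e2 a = Lat (w0 u e2 a) (sm (pi ^ 1) u)" unfolding NL_def by simp
  ultimately show ?thesis unfolding pos_def by blast
qed

lemma pos_X1: "det2 u e2 \<noteq> 0 \<Longrightarrow> pos (Lat u e2) (Lat u (sm pi e2)) 1"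
  unfolding pos_def by (rule exI[of _ u], rule exI[of _ e2]) simp

lemma islat_Lat: "det2 u w \<noteq> 0 \<Longrightarrow> islat (Lat u w)" unfolding islat_def by blast

lemma S1: assumes "Ov a" "det2 u e2 \<noteq> 0"
  shows "BT_adj v (hclass v (Lat u e2)) (Yf u e2 a)"
proof (rule R_adj)
  have p: "pos (Lat u e2) (NL u e2 a) 1" using pos_NL[OF assms] .
  show "hclass v (Lat u e2) \<in> V" using hclass_V islat_Lat assms(2) by blast
  show "Yf u e2 a \<in> V" unfolding Yf_def using hclass_V pos_islat[OF p] by blast
  show "R (hclass v (Lat u e2)) (Yf u e2 a) 1" unfolding R_def Yf_def using p in_hclass by blast
qed

lemma S1b: assumes a: "Ov a" and D: "det2 u e2 \<noteq> 0"
  shows "Yf u e2 a \<noteq> hclass v (Lat u (sm pi e2))"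
proof
  assume eq: "Yf u e2 a = hclass v (Lat u (sm pi e2))"
  have "NL u e2 a \<in> hclass v (Lat u (sm pi e2))" using eq in_hclass unfolding Yf_def by metis
  then obtain d where d: "d \<noteq> 0" "NL u e2 a = scale d (Lat u (sm pi e2))" unfolding hclass_mem by blast
  have "NL u e2 a = Lat u (sm pi e2)" using pos_unique_rep[OF pos_X1[OF D] pos_NL[OF a D] d] by blast
  moreover have "w0 u e2 a \<in> NL u e2 a" unfolding NL_def by (rule Lat_gen(1))
  ultimately have "w0 u e2 a \<in> Lat u (sm pi e2)" by simp
  moreover have "w0 u e2 a = vp (sm a u) (sm (1 / pi) (sm pi e2))" unfolding w0_def by simp
  moreover have "det2 u (sm pi e2) \<noteq> 0" using D by simp
  ultimately have "Ov (1 / pi)" using mem_Lat_comb[of u "sm pi e2" a "1/pi"] by simp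
  thus False using pi by (simp add: dv_def vdiv)
qed

lemma S2: assumes D: "det2 u e2 \<noteq> 0" and adj: "BT_adj v (hclass v (Lat u e2)) Y"
  and ne: "Y \<noteq> hclass v (Lat u (sm pi e2))"
  shows "\<exists>a. Ov a \<and> Y = Yf u e2 a"
proof -
  let ?L = "Lat u e2"
  have XY: "hclass v ?L \<in> V" "Y \<in> V" "R (hclass v ?L) Y 1" using adj_R[OF adj] by auto
  obtain L' where L': "L' \<in> Y" "pos ?L L' 1" using R_strong[OF XY in_hclass] by blast
  obtain a b where ab: "det2 a b \<noteq> 0" "?L = Lat a b" "L' = Lat a (sm (pi ^ 1) b)" using pos_basis[OF L'(2)] by blast
  have "a \<in> ?L" unfolding ab(2) by (rule Lat_gen(1))
  then obtain al be where abe: "Ov al" "Ov be" "a = vp (sm al u) (sm be e2)" unfolding Lat_def by blast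
  have dab: "v (det2 a b) = v (det2 u e2)" using det_eq_lat[OF ab(1) D] ab(2) by simp
  have piL: "sm pi b \<in> scale pi ?L" unfolding ab(2) scale_Lat by (rule Lat_gen(2))
  show ?thesis
  proof (cases "dv 1 be")
    case True
    let ?L1 = "Lat u (sm pi e2)"
    have D1: "det2 u (sm pi e2) \<noteq> 0" using D by simp
    have "Ov (be / pi)" using True pi by (cases "be = 0") (auto simp: dv_def vdiv)
    moreover have "a = vp (sm al u) (sm (be / pi) (sm pi e2))" using abe(3) by simp
    ultimately have aL1: "a \<in> ?L1" using mem_Lat_comb[OF D1, of al "be / pi"] abe(1) by simp
    have "scale pi ?L \<subseteq> ?L1" unfolding scale_Lat
      by (rule Lat_sub[OF Lat_sm1 Lat_gen(2)]) (simp add: dv_def pi)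
    hence "sm pi b \<in> ?L1" using piL by blast
    hence sub: "Lat a (sm pi b) \<subseteq> ?L1" using aL1 Lat_sub by blast
    have "Lat a (sm pi b) = ?L1"
      using Lat_eq_det[OF D1 sub] ab(1) dab D by (simp add: vmult)
    hence "L' = ?L1" using ab(3) by simp
    hence "Y = hclass v ?L1" using V_eq[OF XY(2) L'(1)] by simp
    thus ?thesis using ne by blast
  next
    case False
    hence be: "be \<noteq> 0" "v be = 0" using abe(2) by (auto simp: dv_def)
    define al' where "al' = al / be"
    have al': "Ov al'" unfolding al'_def using abe(1) be by (cases "al = 0") (auto simp: dv_def vdiv)
    let ?N = "NL u e2 al'"
    have DN: "det2 (w0 u e2 al') (sm pi u) \<noteq> 0" using det_w0[of u e2 al'] D by simp
    have aw: "a = sm be (w0 u e2 al')" unfolding abe(3) w0_def al'_def using be by (simp add: vp_def sm_def field_simps)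
    have aN: "a \<in> ?N" unfolding aw NL_def by (rule Lat_sm1) (simp add: dv_def be)
    have "sm pi e2 = vp (sm pi (w0 u e2 al')) (sm (- al') (sm pi u))" unfolding w0_def by (simp add: vp_def sm_def algebra_simps)
    hence h2: "sm pi e2 \<in> Lat (w0 u e2 al') (sm pi u)" using mem_Lat_comb[OF DN, of pi "- al'"] al' by (simp add: dv_def pi)
    have h1: "sm pi u \<in> Lat (w0 u e2 al') (sm pi u)" by (rule Lat_gen(2))
    have "scale pi ?L \<subseteq> ?N" unfolding scale_Lat NL_def by (rule Lat_sub[OF h1 h2])
    hence "sm pi b \<in> ?N" using piL by blast
    hence sub: "Lat a (sm pi b) \<subseteq> ?N" using aN Lat_sub unfolding NL_def by blast
    have "Lat a (sm pi b) = ?N"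
      using Lat_eq_det[OF DN sub[unfolded NL_def]] ab(1) dab D det_w0[of u e2 al'] unfolding NL_def by (simp add: vmult)
    hence "L' = ?N" using ab(3) by simp
    hence "Y = Yf u e2 al'" unfolding Yf_def using V_eq[OF XY(2) L'(1)] by simp
    thus ?thesis using al' by blast
  qed
qed

lemma S3: assumes a: "Ov a" and b: "Ov b" and D: "det2 u e2 \<noteq> 0"
  shows "Yf u e2 a = Yf u e2 b \<longleftrightarrow> dv 1 (a - b)"
proof
  have DN: "det2 (w0 u e2 b) (sm pi u) \<noteq> 0" using det_w0[of u e2 b] D by simp
  have wab: "w0 u e2 a = vp (sm 1 (w0 u e2 b)) (sm ((a - b) / pi) (sm pi u))" unfolding w0_def
    using pi(1) by (simp add: vp_def sm_def field_simps)
  {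
    assume eq: "Yf u e2 a = Yf u e2 b"
    have "NL u e2 a \<in> hclass v (NL u e2 b)" using eq in_hclass unfolding Yf_def by metis
    then obtain d where d: "d \<noteq> 0" "NL u e2 a = scale d (NL u e2 b)" unfolding hclass_mem by blast
    have "NL u e2 a = NL u e2 b" using pos_unique_rep[OF pos_NL[OF b D] pos_NL[OF a D] d] by blast
    moreover have "w0 u e2 a \<in> NL u e2 a" unfolding NL_def by (rule Lat_gen(1))
    ultimately have "w0 u e2 a \<in> NL u e2 b" by simp
    hence "Ov ((a - b) / pi)" using mem_Lat_comb[OF DN, of 1 "(a - b) / pi"] wab unfolding NL_def by simp
    thus "dv 1 (a - b)" using pi by (cases "a - b = 0") (auto simp: dv_def vdiv)
  }
  assume "dv 1 (a - b)"
  hence o: "Ov ((a - b) / pi)" using pi by (cases "a - b = 0") (auto simp: dv_def vdiv)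
  have "w0 u e2 a = vp (w0 u e2 b) (sm ((a - b) / pi) (sm pi u))" using wab by simp
  hence "NL u e2 a = NL u e2 b" unfolding NL_def using Lat_shear[OF o DN] by simp
  thus "Yf u e2 a = Yf u e2 b" unfolding Yf_def by simp
qed

definition Ut where "Ut u e2 t = gM (Mt u (t / det2 u e2))"

lemma Ut_G: "Ut u e2 t \<in> G_hat v e"
  unfolding Ut_def by (rule gM_G) (simp add: mdet_Mt)

lemma Ut_fix: assumes D: "det2 u e2 \<noteq> 0" and t: "Ov t"
  shows "Ut u e2 t (hclass v (Lat u (sm (pi ^ n) e2))) = hclass v (Lat u (sm (pi ^ n) e2))"
proof -
  let ?M = "Mt u (t / det2 u e2)"
  have l1: "lin_act ?M u = u" by (simp add: lin_Mt)
  have l2: "lin_act ?M (sm (pi ^ n) e2) = vp (sm (pi ^ n) e2) (sm (t * pi ^ n) u)"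
    using D by (simp add: lin_Mt)
  have "lin_act ?M ` Lat u (sm (pi ^ n) e2) = Lat u (sm (pi ^ n) e2)"
    unfolding lin_Lat l1 l2 using Lat_shear2[of "t * pi ^ n" u "sm (pi ^ n) e2"] OO_mult[OF t OO_pi_pow] D by simp
  moreover have "mdet ?M \<noteq> 0" by (simp add: mdet_Mt)
  ultimately show ?thesis unfolding Ut_def using gM_hclass[OF _ islat_Lat[OF det2_pi[OF D]], of ?M n] by simp
qed

lemma Ut_Yf: assumes D: "det2 u e2 \<noteq> 0"
  shows "Ut u e2 t (Yf u e2 a) = Yf u e2 (a + t)"
proof -
  let ?M = "Mt u (t / det2 u e2)"
  have l1: "lin_act ?M (sm pi u) = sm pi u" by (simp add: lin_Mt)
  have dw: "det2 u (w0 u e2 a) = det2 u e2" unfolding w0_def by simp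
  have "lin_act ?M (w0 u e2 a) = vp (w0 u e2 a) (sm t u)"
    using D by (simp add: lin_Mt dw)
  also have "\<dots> = w0 u e2 (a + t)" unfolding w0_def by (simp add: vp_def sm_def algebra_simps)
  finally have l2: "lin_act ?M (w0 u e2 a) = w0 u e2 (a + t)" .
  have DN: "det2 (w0 u e2 a) (sm pi u) \<noteq> 0" using det_w0[of u e2 a] D by simp
  have "lin_act ?M ` NL u e2 a = NL u e2 (a + t)" unfolding NL_def lin_Lat l1 l2 ..
  moreover have "mdet ?M \<noteq> 0" by (simp add: mdet_Mt)
  ultimately show ?thesis unfolding Ut_def Yf_def NL_def using gM_hclass[OF _ islat_Lat[OF DN], of ?M] by simp
qed

end


lemma card_kernel:
  assumes eq: "\<forall>a\<in>A. \<forall>b\<in>A. f a = f b \<longleftrightarrow> g a = g b"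
  shows "card (f ` A) = card (g ` A)"
proof -
  define phi where "phi z = g (SOME a. a \<in> A \<and> f a = z)" for z
  have phif: "phi (f a) = g a" if "a \<in> A" for a
  proof -
    have "\<exists>a'. a' \<in> A \<and> f a' = f a" using that by blast
    hence "(SOME a'. a' \<in> A \<and> f a' = f a) \<in> A \<and> f (SOME a'. a' \<in> A \<and> f a' = f a) = f a" by (rule someI_ex)
    thus ?thesis unfolding phi_def using eq that by blast
  qed
  have "inj_on phi (f ` A)"
  proof (rule inj_onI)
    fix z z' assume "z \<in> f ` A" "z' \<in> f ` A" "phi z = phi z'"
    then obtain a a' where "a \<in> A" "a' \<in> A" "z = f a" "z' = f a'" "phi z = phi z'" by blast
    thus "z = z'" using phif eq by metis
  qed
  moreover have "phi ` (f ` A) = g ` A" using phif by (auto simp: image_image)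
  ultimately show ?thesis using card_image by metis
qed

context VF begin

lemma geo_unique2:
  assumes "X \<in> V" "Y \<in> V" "Z \<in> V" "Z' \<in> V" "D X Y = n" "D X Z = i" "D Z Y = n - i" "D X Z' = i" "D Z' Y = n - i" "i \<le> n"
  shows "Z = Z'"
proof -
  obtain L L' where h: "L \<in> X" "L' \<in> Y" "pos L L' n" using D_R[OF assms(1,2)] assms(5) unfolding R_def by blast
  obtain u w where b: "det2 u w \<noteq> 0" "L = Lat u w" "L' = Lat u (sm (pi ^ n) w)" using pos_basis[OF h(3)] by blast
  have "Z = hclass v (Lat u (sm (pi ^ i) w))" using geo_unique[OF assms(1,2,3) b(1)] h b assms by simp
  moreover have "Z' = hclass v (Lat u (sm (pi ^ i) w))" using geo_unique[OF assms(1,2,4) b(1)] h b assms by simp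
  ultimately show ?thesis by simp
qed

lemma fix_rays:
  assumes xV: "\<forall>i. x i \<in> V" and f: "f \<in> G_hat v e" and fx: "\<forall>j\<ge>m. f (x j) = x j"
    and p: "BT_ray v p" "p 0 = x m" "ray_equiv p (pos_ray x)"
  shows "f (p i) = p i"
proof -
  have fa: "BT_aut v f" using G_aut[OF f] .
  obtain a b where ab: "\<forall>n. p (n + a) = x (int (n + b))" using p(3) unfolding ray_equiv_def pos_ray_def by blast
  have pV: "p j \<in> V" for j using p(1) unfolding BT_ray_def by blast
  have pD: "D (p j) (p l) = nat \<bar>int j - int l\<bar>" for j l
    using p(1) BT_dist_D[OF pV pV] unfolding BT_ray_def by metis
  define K where "K = i + a + nat \<bar>m\<bar>"
  have "p K = x (int (i + nat \<bar>m\<bar> + b))" using ab[rule_format, of "i + nat \<bar>m\<bar>"] unfolding K_def by (simp add: ac_simps)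
  moreover have "int (i + nat \<bar>m\<bar> + b) \<ge> m" by simp
  ultimately have fK: "f (p K) = p K" using fx by simp
  have iK: "i \<le> K" unfolding K_def by simp
  have f0: "f (p 0) = p 0" using fx p(2) by simp
  have "p i = f (p i)"
  proof (rule geo_unique2[where X="p 0" and Y="p K" and Z="p i" and Z'="f (p i)" and n=K and i=i])
    show "p 0 \<in> V" "p K \<in> V" "p i \<in> V" "f (p i) \<in> V" using pV aut_V[OF fa pV] by auto
    show "D (p 0) (p K) = K" using pD by simp
    show "D (p 0) (p i) = i" using pD by simp
    show "D (p i) (p K) = K - i" using pD iK by simp
    show "D (p 0) (f (p i)) = i" using aut_D[OF fa pV pV, of 0 i] f0 pD by simp
    show "D (f (p i)) (p K) = K - i" using aut_D[OF fa pV pV, of i K] fK pD iK by simp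
    show "i \<le> K" using iK .
  qed
  thus ?thesis by simp
qed

definition Fix where "Fix e x m = {f \<in> G_hat v e. \<forall>j\<ge>m. f (x j) = x j}"

lemma Nk_eq:
  assumes xV: "\<forall>i. x i \<in> V" and xD: "\<forall>i j. D (x i) (x j) = nat \<bar>i - j\<bar>"
  shows "N_hat_k v e x m = Fix e x m"
proof (intro set_eqI iffI)
  fix f assume fN: "f \<in> N_hat_k v e x m"
  hence fG: "f \<in> G_hat v e" unfolding N_hat_k_def N_hat_def B_hat_def by blast
  define p where "p i = x (m + int i)" for i
  have pV: "p i \<in> V" for i unfolding p_def using xV by blast
  have "BT_ray v p" unfolding BT_ray_def
  proof (intro conjI allI)
    fix i show "p i \<in> V" by (rule pV)
  next
    fix i j show "BT_dist v (p i) (p j) = nat \<bar>int i - int j\<bar>"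
      using BT_dist_D[OF pV pV, of i j] xD unfolding p_def by simp
  qed
  moreover have "p 0 = x m" unfolding p_def by simp
  moreover have "ray_equiv p (pos_ray x)"
    unfolding ray_equiv_def pos_ray_def
  proof (cases "0 \<le> m")
    case True
    have "\<forall>n. p (n + 0) = x (int (n + nat m))" unfolding p_def using True by (simp add: add.commute)
    thus "\<exists>a b. \<forall>n. p (n + a) = x (int (n + b))" by blast
  next
    case False
    have "\<forall>n. p (n + nat (- m)) = x (int (n + 0))" unfolding p_def using False by simp
    thus "\<exists>a b. \<forall>n. p (n + a) = x (int (n + b))" by blast
  qed
  ultimately have "\<forall>i. f (p i) = p i" using fN unfolding N_hat_k_def by blast
  hence "\<forall>j\<ge>m. f (x j) = x j" unfolding p_def by (metis le_add_diff_inverse nat_0_le nat_diff_distrib' zero_le_imp_eq_int diff_ge_0_iff_ge add_diff_cancel_left' int_nat_eq)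
  thus "f \<in> Fix e x m" unfolding Fix_def using fG by blast
next
  fix f assume fF: "f \<in> Fix e x m"
  hence fG: "f \<in> G_hat v e" and fx: "\<forall>j\<ge>m. f (x j) = x j" unfolding Fix_def by blast+
  have "\<forall>n. (f \<circ> pos_ray x) (n + nat \<bar>m\<bar>) = pos_ray x (n + nat \<bar>m\<bar>)"
    unfolding pos_ray_def using fx by simp
  hence "ray_equiv (f \<circ> pos_ray x) (pos_ray x)" unfolding ray_equiv_def by blast
  hence "f \<in> B_hat v e x" unfolding B_hat_def using fG by blast
  moreover have "f (x m) = x m" using fx by simp
  ultimately have "f \<in> N_hat v e x" unfolding N_hat_def by blast
  moreover have "\<forall>p. BT_ray v p \<and> p 0 = x m \<and> ray_equiv p (pos_ray x) \<longrightarrow> (\<forall>i. f (p i) = p i)"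
    using fix_rays[OF xV fG fx] by blast
  ultimately show "f \<in> N_hat_k v e x m" unfolding N_hat_k_def by blast
qed

end

context VF begin

lemma Fix_comp: "h1 \<in> Fix e x m \<Longrightarrow> h2 \<in> Fix e x m \<Longrightarrow> h1 \<circ> h2 \<in> Fix e x m"
  unfolding Fix_def using G_comp by auto

lemma Fix_inv: assumes "h \<in> Fix e x m" shows "ginv h \<in> Fix e x m"
proof -
  have h: "h \<in> G_hat v e" "\<forall>j\<ge>m. h (x j) = x j" using assms unfolding Fix_def by blast+
  have "\<forall>j\<ge>m. ginv h (x j) = x j" using h(2) ginv_left[OF G_aut[OF h(1)]] by metis
  thus ?thesis unfolding Fix_def using G_inv[OF h(1)] by blast
qed

lemma Fix_id: "id \<in> Fix e x m" unfolding Fix_def using G_id by simp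

lemma coset_eq:
  fixes k :: int
  assumes g: "g \<in> Fix e x k" and g': "g' \<in> Fix e x k"
  shows "((\<lambda>h. g \<circ> h) ` Fix e x (k - 1) = (\<lambda>h. g' \<circ> h) ` Fix e x (k - 1)) \<longleftrightarrow> g (x (k - 1)) = g' (x (k - 1))"
proof
  let ?K = "Fix e x (k - 1)"
  assume eq: "(\<lambda>h. g \<circ> h) ` ?K = (\<lambda>h. g' \<circ> h) ` ?K"
  have "g' \<circ> id \<in> (\<lambda>h. g' \<circ> h) ` ?K" using Fix_id by blast
  hence "g' \<in> (\<lambda>h. g \<circ> h) ` ?K" using eq by simp
  then obtain h where h: "h \<in> ?K" "g' = g \<circ> h" by blast
  have "\<forall>j\<ge>k - 1. h (x j) = x j" using h(1) unfolding Fix_def by blast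
  hence "h (x (k - 1)) = x (k - 1)" by simp
  thus "g (x (k - 1)) = g' (x (k - 1))" using h(2) by simp
next
  let ?K = "Fix e x (k - 1)"
  assume eq: "g (x (k - 1)) = g' (x (k - 1))"
  have gG: "g \<in> G_hat v e" "\<forall>j\<ge>k. g (x j) = x j" using g unfolding Fix_def by blast+
  have gG': "g' \<in> G_hat v e" "\<forall>j\<ge>k. g' (x j) = x j" using g' unfolding Fix_def by blast+
  have ga': "BT_aut v g'" using G_aut[OF gG'(1)] .
  define h' where "h' = ginv g' \<circ> g"
  have h'G: "h' \<in> G_hat v e" unfolding h'_def using G_comp[OF G_inv[OF gG'(1)] gG(1)] .
  have "h' (x j) = x j" if "j \<ge> k - 1" for j
  proof (cases "j = k - 1")
    case True thus ?thesis unfolding h'_def using eq ginv_left[OF ga'] by simp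
  next
    case False
    hence "j \<ge> k" using that by simp
    hence e1: "g (x j) = x j" "g' (x j) = x j" using gG(2) gG'(2) by auto
    have "ginv g' (g' (x j)) = x j" by (rule ginv_left[OF ga'])
    thus ?thesis unfolding h'_def using e1 by simp
  qed
  hence h'K: "h' \<in> ?K" unfolding Fix_def using h'G by blast
  have gdec: "g = g' \<circ> h'" unfolding h'_def using ginv_right[OF ga'] by (simp add: comp_def)
  have h'a: "BT_aut v h'" using G_aut[OF h'G] .
  show "(\<lambda>h. g \<circ> h) ` ?K = (\<lambda>h. g' \<circ> h) ` ?K"
  proof (intro set_eqI iffI)
    fix z assume "z \<in> (\<lambda>h. g \<circ> h) ` ?K"
    then obtain h where h: "h \<in> ?K" "z = g \<circ> h" by blast
    have "h' \<circ> h \<in> ?K" using Fix_comp[OF h'K h(1)] .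
    moreover have "z = g' \<circ> (h' \<circ> h)" using h(2) gdec by (simp add: comp_assoc)
    ultimately show "z \<in> (\<lambda>h. g' \<circ> h) ` ?K" by blast
  next
    fix z assume "z \<in> (\<lambda>h. g' \<circ> h) ` ?K"
    then obtain h where h: "h \<in> ?K" "z = g' \<circ> h" by blast
    have "ginv h' \<circ> h \<in> ?K" using Fix_comp[OF Fix_inv[OF h'K] h(1)] .
    moreover have "z = g \<circ> (ginv h' \<circ> h)"
    proof
      fix X show "z X = (g \<circ> (ginv h' \<circ> h)) X" using h(2) gdec ginv_right[OF h'a] by simp
    qed
    ultimately show "z \<in> (\<lambda>h. g \<circ> h) ` ?K" by blast
  qed
qed

lemma main_VF:
  assumes comp: "val_complete v" and cq: "card (residue_classes v) = q" and bp: "BT_biinf_path v x"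
  shows "N_hat_k v e x (k - 1) \<subseteq> N_hat_k v e x k \<and>
         coset_index (N_hat_k v e x k) (N_hat_k v e x (k - 1)) = q"
proof -
  have xV: "\<forall>i. x i \<in> V" using bp unfolding BT_biinf_path_def by blast
  have xD: "\<forall>i j. D (x i) (x j) = nat \<bar>i - j\<bar>"
  proof (intro allI)
    fix i j
    have "BT_dist v (x i) (x j) = nat \<bar>i - j\<bar>" using bp unfolding BT_biinf_path_def by blast
    thus "D (x i) (x j) = nat \<bar>i - j\<bar>" using BT_dist_D[OF xV[rule_format] xV[rule_format]] by simp
  qed
  have NK: "N_hat_k v e x m = Fix e x m" for m using Nk_eq[OF xV xD] .
  let ?H = "Fix e x k" and ?K = "Fix e x (k - 1)"
  have incl: "?K \<subseteq> ?H" unfolding Fix_def by auto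
  let ?y0 = "x (k - 1)"
  have c1: "coset_index ?H ?K = card ((\<lambda>g. g ?y0) ` ?H)"
    unfolding coset_index_def
  proof (rule card_kernel, intro ballI)
    fix g g' assume "g \<in> ?H" "g' \<in> ?H"
    thus "((\<lambda>h. g \<circ> h) ` ?K = (\<lambda>h. g' \<circ> h) ` ?K) = (g ?y0 = g' ?y0)" by (rule coset_eq)
  qed
  define y where "y n = x (k + int n)" for n
  have yV: "\<forall>n. y n \<in> V" unfolding y_def using xV by blast
  have yD: "\<forall>i j. D (y i) (y j) = nat \<bar>int i - int j\<bar>" unfolding y_def using xD by simp
  obtain u e2 where ue: "det2 u e2 \<noteq> 0" "\<forall>n. y n = hclass v (Lat u (sm (pi ^ n) e2))"
    using ray_struct[OF comp yV yD] by blast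
  have xk: "x k = hclass v (Lat u e2)" using ue(2)[rule_format, of 0] unfolding y_def by simp
  have xk1: "x (k + 1) = hclass v (Lat u (sm pi e2))" using ue(2)[rule_format, of 1] unfolding y_def by simp
  have xj: "x j = hclass v (Lat u (sm (pi ^ nat (j - k)) e2))" if "j \<ge> k" for j
    using ue(2)[rule_format, of "nat (j - k)"] that unfolding y_def by simp
  define S where "S = {Y. BT_adj v (x k) Y \<and> Y \<noteq> x (k + 1)}"
  have y0S: "?y0 \<in> S"
  proof -
    have "D (x k) ?y0 = 1" using xD by simp
    hence "BT_adj v (x k) ?y0" using adj_D xV by blast
    moreover have "?y0 \<noteq> x (k + 1)"
    proof
      assume "?y0 = x (k + 1)"
      hence "D ?y0 (x (k + 1)) = 0" using D_refl xV by simp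
      thus False using xD by simp
    qed
    ultimately show ?thesis unfolding S_def by blast
  qed
  have Seq: "S = Yf u e2 ` {a. Ov a}"
  proof (intro set_eqI iffI)
    fix Y assume "Y \<in> S"
    hence "BT_adj v (hclass v (Lat u e2)) Y" "Y \<noteq> hclass v (Lat u (sm pi e2))" unfolding S_def xk xk1 by auto
    thus "Y \<in> Yf u e2 ` {a. Ov a}" using S2[OF ue(1)] by blast
  next
    fix Y assume "Y \<in> Yf u e2 ` {a. Ov a}"
    then obtain a where a: "Ov a" "Y = Yf u e2 a" by blast
    thus "Y \<in> S" unfolding S_def xk xk1 using S1[OF a(1) ue(1)] S1b[OF a(1) ue(1)] by simp
  qed
  obtain a0 where a0: "Ov a0" "?y0 = Yf u e2 a0" using y0S Seq by blast
  have orbit: "(\<lambda>g. g ?y0) ` ?H = S"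
  proof (intro set_eqI iffI)
    fix Y assume "Y \<in> (\<lambda>g. g ?y0) ` ?H"
    then obtain g where g: "g \<in> ?H" "Y = g ?y0" by blast
    have gG: "g \<in> G_hat v e" "\<forall>j\<ge>k. g (x j) = x j" using g(1) unfolding Fix_def by blast+
    have ga: "BT_aut v g" using G_aut[OF gG(1)] .
    have "D (x k) Y = D (g (x k)) (g ?y0)" using gG(2) g(2) by simp
    also have "\<dots> = 1" using aut_D[OF ga xV[rule_format] xV[rule_format]] xD by simp
    finally have d1: "D (x k) Y = 1" .
    have "Y \<in> V" using aut_V[OF ga xV[rule_format]] g(2) by simp
    hence "BT_adj v (x k) Y" using adj_D xV d1 by blast
    moreover have "Y \<noteq> x (k + 1)"
    proof
      assume "Y = x (k + 1)"
      hence "g ?y0 = g (x (k + 1))" using gG(2) g(2) by simp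
      hence "?y0 = x (k + 1)" using aut_inj[OF ga xV[rule_format] xV[rule_format]] by blast
      thus False using y0S unfolding S_def by blast
    qed
    ultimately show "Y \<in> S" unfolding S_def by blast
  next
    fix Y assume "Y \<in> S"
    then obtain a where a: "Ov a" "Y = Yf u e2 a" using Seq by blast
    let ?t = "a - a0"
    have t: "Ov ?t" using dv_diff[OF a(1) a0(1)] .
    have "Ut u e2 ?t \<in> ?H" unfolding Fix_def
    proof (intro CollectI conjI allI impI)
      show "Ut u e2 ?t \<in> G_hat v e" by (rule Ut_G)
      fix j assume "k \<le> j"
      thus "Ut u e2 ?t (x j) = x j" using xj Ut_fix[OF ue(1) t] by simp
    qed
    moreover have "Ut u e2 ?t ?y0 = Y" using a0(2) Ut_Yf[OF ue(1)] a(2) by simp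
    ultimately show "Y \<in> (\<lambda>g. g ?y0) ` ?H" by blast
  qed
  define Rf where "Rf a = {y \<in> val_ring v. y - a \<in> max_ideal v}" for a
  have vr: "val_ring v = {a. Ov a}" unfolding val_ring_def dv_def by simp
  have mi: "z \<in> max_ideal v \<longleftrightarrow> dv 1 z" for z unfolding max_ideal_def dv_def by auto
  have Rf_eq: "Rf a = Rf b \<longleftrightarrow> dv 1 (a - b)" if "Ov a" "Ov b" for a b
  proof
    assume "Rf a = Rf b"
    moreover have "a \<in> Rf a" unfolding Rf_def using that mi vr by simp
    ultimately have "a \<in> Rf b" by simp
    thus "dv 1 (a - b)" unfolding Rf_def using mi by simp
  next
    assume h: "dv 1 (a - b)"
    have "dv 1 (y - a) \<longleftrightarrow> dv 1 (y - b)" for y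
    proof
      assume "dv 1 (y - a)" from dv_add[OF this h] show "dv 1 (y - b)" by simp
    next
      assume "dv 1 (y - b)" from dv_diff[OF this h] show "dv 1 (y - a)" by simp
    qed
    thus "Rf a = Rf b" unfolding Rf_def using mi by simp
  qed
  have "residue_classes v = Rf ` {a. Ov a}" unfolding residue_classes_def Rf_def vr ..
  moreover have "card (Yf u e2 ` {a. Ov a}) = card (Rf ` {a. Ov a})"
  proof (rule card_kernel, intro ballI)
    fix a b assume "a \<in> {a. Ov a}" "b \<in> {a. Ov a}"
    hence ab: "Ov a" "Ov b" by auto
    show "(Yf u e2 a = Yf u e2 b) = (Rf a = Rf b)" using S3[OF ab ue(1)] Rf_eq[OF ab] by simp
  qed
  ultimately have "card S = q" using cq Seq by simp
  hence "coset_index ?H ?K = q" using c1 orbit by simp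
  thus ?thesis using NK incl by simp
qed

end

theorem mainTheorem15:
  fixes v :: "'a::field \<Rightarrow> int" and q :: nat and e :: nat
    and x :: "int \<Rightarrow> ('a \<times> 'a) set set" and k :: int
  assumes "nonarch_local_field v q"
    and "1 \<le> e"
    and "BT_biinf_path v x"
  shows "N_hat_k v e x (k - 1) \<subseteq> N_hat_k v e x k \<and>
         coset_index (N_hat_k v e x k) (N_hat_k v e x (k - 1)) = q"
proof -
  have h: "\<forall>x y. x \<noteq> 0 \<longrightarrow> y \<noteq> 0 \<longrightarrow> v (x * y) = v x + v y"
    "\<forall>x y. x \<noteq> 0 \<longrightarrow> y \<noteq> 0 \<longrightarrow> x + y \<noteq> 0 \<longrightarrow> min (v x) (v y) \<le> v (x + y)"
    "\<exists>p. p \<noteq> 0 \<and> v p = 1" "val_complete v" "card (residue_classes v) = q"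
    using assms(1) unfolding nonarch_local_field_def by blast+
  interpret VF v by (unfold_locales) (use h in blast)+
  show ?thesis using main_VF[OF h(4) h(5) assms(3)] .
qed


end
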